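(* Let $(G,\gamma,b)$ be an RES-graph such that every reduction of $(G,\gamma,b)$ has flooding number at least $\tilde{\nu}(G,\gamma,b)+2$. Then for every arc $f$ whose edge is an edge of $G-b$, both $(f,0)$ and $(f,1)$ are non-loop elements of $M(G,\gamma,b)$. Equivalently, for each $i\in\{0,1\}$ there is an optimal flooding of $(G,\gamma,b)$ containing a zero circuit that is represented by $(f,i)$.
   Context: Graphs are finite and may have loops and multiple edges. Each edge is an unordered pair of half-edges; each half-edge is incident to a vertex, and a loop contributes $2$ to the degree of its vertex. An arc is an ordered pair of half-edges forming an edge, with tail (vertex of the first half-edge) and head (vertex of the second). A trail is a sequence of arcs with pairwise distinct edges, the head of each arc being the tail of the next. A circuit is a trail whose head equals its tail. A circuit hits $v$ if it contains an arc incident to $v$. A circuit-decomposition is a collection of circuits using each edge exactly once. A graph is Eulerian if it is connected and all degrees are even. A signature is a function $\gamma:E(G)\to\mathbb{Z}_2$. The weight of a trail is the $\mathbb{Z}_2$-sum of $\gamma$ over its edges, and a trail is zero or non-zero accordingly. An RES-graph is a triple $(G,\gamma,b)$ with $G$ Eulerian, $\gamma$ a signature, and $b\in V(G)$. The flooding number $\tilde{\nu}(G,\gamma,b)$ is the maximum size of a circuit-decomposition in which every circuit is non-zero and hits $b$; it is $0$ if none exists. A flooding is a circuit-decomposition of size $\deg(b)/2$ in which every circuit has tail and head $b$. A flooding is optimal if it has the maximum number of non-zero circuits among all floodings. For a zero circuit $C$ with tail and head $b$, a representative of $C$ is a pair $(f,\alpha)$ where $f$ is an arc of $C$ and $\alpha\in\{0,1\}$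 is the weight of the initial subtrail of $C$ ending with $f$. A system of representatives for a flooding is a set with exactly one representative of each of its zero circuits. The flooding matroid $M(G,\gamma,b)$ has ground set all pairs $(f,\alpha)$ with $f$ an arc and $\alpha\in\{0,1\}$. Its bases are the systems of representatives of optimal floodings; the empty set is a basis if some optimal flooding has no zero circuit. An element is a non-loop element if it lies in some basis. Let $e=\{h,r\}$ be an edge of $G-b$. An $e$-reduction of $(G,\gamma,b)$ is any RES-graph $(\hat G,\hat\gamma,b)$ constructed as follows. Take new half-edges $h',r'$ at $b$. The graph $\hat G$ is obtained from $G$ by deleting $e$ and adding the edges $\{h,h'\}$ and $\{r,r'\}$. The signature $\hat\gamma$ agrees with $\gamma$ elsewhere, and $\hat\gamma(\{h,h'\})+\hat\gamma(\{r,r'\})=\gamma(e)$. A reduction is an $e$-reduction for some edge $e$ of $G-b$. *)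

theory Defs
  imports Main "HOL-Library.Z2"
begin

text \<open>Graphs with half-edges. Half-edges are natural numbers (so fresh half-edges
  are always available for reductions); vertices have an arbitrary type.
  An edge is the unordered pair {h, mate h}.\<close>

record 'v hgraph =
  verts :: "'v set"
  hedges :: "nat set"
  inc :: "nat \<Rightarrow> 'v"
  mate :: "nat \<Rightarrow> nat"

definition wf_graph :: "'v hgraph \<Rightarrow> bool" where
  "wf_graph G \<longleftrightarrow> finite (verts G) \<and> finite (hedges G) \<and>
     (\<forall>h\<in>hedges G. inc G h \<in> verts G \<and> mate G h \<in> hedges G \<and>
                    mate G h \<noteq> h \<and> mate G (mate G h) = h)"

definition edges :: "'v hgraph \<Rightarrow> nat set set" where
  "edges G = {{h, mate G h} | h. h \<in> hedges G}"

text \<open>Degree: number of half-edges at v (a loop contributes 2).\<close>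
definition deg :: "'v hgraph \<Rightarrow> 'v \<Rightarrow> nat" where
  "deg G v = card {h \<in> hedges G. inc G h = v}"

definition adj :: "'v hgraph \<Rightarrow> ('v \<times> 'v) set" where
  "adj G = {(inc G h, inc G (mate G h)) | h. h \<in> hedges G}"

definition connected_graph :: "'v hgraph \<Rightarrow> bool" where
  "connected_graph G \<longleftrightarrow> (\<forall>u\<in>verts G. \<forall>v\<in>verts G. (u, v) \<in> (adj G)\<^sup>*)"

definition eulerian :: "'v hgraph \<Rightarrow> bool" where
  "eulerian G \<longleftrightarrow> wf_graph G \<and> connected_graph G \<and> (\<forall>v\<in>verts G. even (deg G v))"

type_synonym arc = "nat \<times> nat"

definition is_arc :: "'v hgraph \<Rightarrow> arc \<Rightarrow> bool" where
  "is_arc G a \<longleftrightarrow> fst a \<in> hedges G \<and> snd a = mate G (fst a)"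

definition arc_edge :: "arc \<Rightarrow> nat set" where
  "arc_edge a = {fst a, snd a}"

definition tail :: "'v hgraph \<Rightarrow> arc \<Rightarrow> 'v" where
  "tail G a = inc G (fst a)"

definition head :: "'v hgraph \<Rightarrow> arc \<Rightarrow> 'v" where
  "head G a = inc G (snd a)"

definition is_trail :: "'v hgraph \<Rightarrow> arc list \<Rightarrow> bool" where
  "is_trail G T \<longleftrightarrow> T \<noteq> [] \<and> (\<forall>a\<in>set T. is_arc G a) \<and> distinct (map arc_edge T) \<and>
     (\<forall>i. Suc i < length T \<longrightarrow> head G (T ! i) = tail G (T ! Suc i))"

definition trail_tail :: "'v hgraph \<Rightarrow> arc list \<Rightarrow> 'v" where
  "trail_tail G T = tail G (hd T)"

definition trail_head :: "'v hgraph \<Rightarrow> arc list \<Rightarrow> 'v" where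
  "trail_head G T = head G (last T)"

definition is_circuit :: "'v hgraph \<Rightarrow> arc list \<Rightarrow> bool" where
  "is_circuit G C \<longleftrightarrow> is_trail G C \<and> trail_head G C = trail_tail G C"

definition hits :: "'v hgraph \<Rightarrow> arc list \<Rightarrow> 'v \<Rightarrow> bool" where
  "hits G C v \<longleftrightarrow> (\<exists>a\<in>set C. tail G a = v \<or> head G a = v)"

definition circuit_decomposition :: "'v hgraph \<Rightarrow> arc list list \<Rightarrow> bool" where
  "circuit_decomposition G D \<longleftrightarrow> (\<forall>C\<in>set D. is_circuit G C) \<and>
     distinct (concat (map (map arc_edge) D)) \<and>
     set (concat (map (map arc_edge) D)) = edges G"

type_synonym signature = "nat set \<Rightarrow> bit"

definition weight :: "signature \<Rightarrow> arc list \<Rightarrow> bit" where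
  "weight \<gamma> T = sum_list (map (\<gamma> \<circ> arc_edge) T)"

definition RES_graph :: "'v hgraph \<Rightarrow> signature \<Rightarrow> 'v \<Rightarrow> bool" where
  "RES_graph G \<gamma> b \<longleftrightarrow> eulerian G \<and> b \<in> verts G"

definition flooding_number :: "'v hgraph \<Rightarrow> signature \<Rightarrow> 'v \<Rightarrow> nat" where
  "flooding_number G \<gamma> b = Max (insert 0 {length D | D. circuit_decomposition G D \<and>
      (\<forall>C\<in>set D. weight \<gamma> C \<noteq> 0 \<and> hits G C b)})"

definition flooding :: "'v hgraph \<Rightarrow> 'v \<Rightarrow> arc list list \<Rightarrow> bool" where
  "flooding G b F \<longleftrightarrow> circuit_decomposition G F \<and> 2 * length F = deg G b \<and>
     (\<forall>C\<in>set F. trail_tail G C = b \<and> trail_head G C = b)"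

definition num_nonzero :: "signature \<Rightarrow> arc list list \<Rightarrow> nat" where
  "num_nonzero \<gamma> F = length (filter (\<lambda>C. weight \<gamma> C \<noteq> 0) F)"

definition optimal_flooding :: "'v hgraph \<Rightarrow> signature \<Rightarrow> 'v \<Rightarrow> arc list list \<Rightarrow> bool" where
  "optimal_flooding G \<gamma> b F \<longleftrightarrow> flooding G b F \<and>
     (\<forall>F'. flooding G b F' \<longrightarrow> num_nonzero \<gamma> F' \<le> num_nonzero \<gamma> F)"

definition represents :: "signature \<Rightarrow> arc \<times> bit \<Rightarrow> arc list \<Rightarrow> bool" where
  "represents \<gamma> x C \<longleftrightarrow> (\<exists>i<length C. fst x = C ! i \<and> snd x = weight \<gamma> (take (Suc i) C))"

definition zero_circuits :: "signature \<Rightarrow> arc list list \<Rightarrow> arc list set" where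
  "zero_circuits \<gamma> F = {C \<in> set F. weight \<gamma> C = 0}"

definition system_of_representatives ::
    "signature \<Rightarrow> arc list list \<Rightarrow> (arc \<times> bit) set \<Rightarrow> bool" where
  "system_of_representatives \<gamma> F R \<longleftrightarrow>
     (\<forall>x\<in>R. \<exists>C\<in>zero_circuits \<gamma> F. represents \<gamma> x C) \<and>
     (\<forall>C\<in>zero_circuits \<gamma> F. \<exists>!x. x \<in> R \<and> represents \<gamma> x C)"

definition flooding_matroid_bases ::
    "'v hgraph \<Rightarrow> signature \<Rightarrow> 'v \<Rightarrow> (arc \<times> bit) set set" where
  "flooding_matroid_bases G \<gamma> b =
     {R. \<exists>F. optimal_flooding G \<gamma> b F \<and> system_of_representatives \<gamma> F R}"

definition nonloop_element :: "'v hgraph \<Rightarrow> signature \<Rightarrow> 'v \<Rightarrow> arc \<times> bit \<Rightarrow> bool" where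
  "nonloop_element G \<gamma> b x \<longleftrightarrow> (\<exists>B\<in>flooding_matroid_bases G \<gamma> b. x \<in> B)"

definition edge_of_G_minus :: "'v hgraph \<Rightarrow> 'v \<Rightarrow> nat \<Rightarrow> nat \<Rightarrow> bool" where
  "edge_of_G_minus G b h r \<longleftrightarrow> h \<in> hedges G \<and> r = mate G h \<and> inc G h \<noteq> b \<and> inc G r \<noteq> b"

definition is_reduction ::
    "'v hgraph \<Rightarrow> signature \<Rightarrow> 'v \<Rightarrow> 'v hgraph \<Rightarrow> signature \<Rightarrow> bool" where
  "is_reduction G \<gamma> b G' \<gamma>' \<longleftrightarrow>
     (\<exists>h r h' r'. edge_of_G_minus G b h r \<and>
        h' \<notin> hedges G \<and> r' \<notin> hedges G \<and> h' \<noteq> r' \<and>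
        G' = \<lparr>verts = verts G, hedges = hedges G \<union> {h', r'},
              inc = (inc G)(h' := b, r' := b),
              mate = (mate G)(h := h', h' := h, r := r', r' := r)\<rparr> \<and>
        (\<forall>e\<in>edges G - {{h, r}}. \<gamma>' e = \<gamma> e) \<and>
        \<gamma>' {h, h'} + \<gamma>' {r, r'} = \<gamma> {h, r})"

end

theory Submission
  imports Defs "HOL-Library.Multiset"
begin


fun chain :: "'v hgraph \<Rightarrow> arc list \<Rightarrow> bool" where
  "chain G [] = True"
| "chain G [a] = True"
| "chain G (a # c # T) = (head G a = tail G c \<and> chain G (c # T))"

lemma chain_iff: "(\<forall>i. Suc i < length T \<longrightarrow> head G (T ! i) = tail G (T ! Suc i)) \<longleftrightarrow> chain G T"
proof (induction G T rule: chain.induct)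
  case (3 G a c T)
  show ?case
  proof
    assume H: "\<forall>i. Suc i < length (a # c # T) \<longrightarrow> head G ((a # c # T) ! i) = tail G ((a # c # T) ! Suc i)"
    have "head G a = tail G c" using H[rule_format, of 0] by simp
    moreover have "\<forall>i. Suc i < length (c # T) \<longrightarrow> head G ((c # T) ! i) = tail G ((c # T) ! Suc i)"
      using H by (metis Suc_less_eq length_Cons nth_Cons_Suc)
    ultimately show "chain G (a # c # T)" using 3 by simp
  next
    assume H: "chain G (a # c # T)"
    show "\<forall>i. Suc i < length (a # c # T) \<longrightarrow> head G ((a # c # T) ! i) = tail G ((a # c # T) ! Suc i)"
    proof (intro allI impI)
      fix i assume i: "Suc i < length (a # c # T)"
      show "head G ((a # c # T) ! i) = tail G ((a # c # T) ! Suc i)"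
      proof (cases i)
        case 0 then show ?thesis using H by simp
      next
        case (Suc j) then show ?thesis using H 3 i by auto
      qed
    qed
  qed
qed auto

definition wk :: "'v hgraph \<Rightarrow> arc list \<Rightarrow> 'v \<Rightarrow> 'v \<Rightarrow> bool" where
  "wk G T x y \<longleftrightarrow> (if T = [] then x = y else chain G T \<and> tail G (hd T) = x \<and> head G (last T) = y)"

lemma wk_Nil[simp]: "wk G [] x y \<longleftrightarrow> x = y"
  by (simp add: wk_def)

lemma wk_Cons[simp]: "wk G (a # T) x y \<longleftrightarrow> tail G a = x \<and> wk G T (head G a) y"
  by (cases T) (auto simp: wk_def)

lemma wk_append: "wk G (T @ S) x z \<longleftrightarrow> (\<exists>y. wk G T x y \<and> wk G S y z)"
  by (induction T arbitrary: x) auto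

lemma wk_append_I: "wk G T x y \<Longrightarrow> wk G S y z \<Longrightarrow> wk G (T @ S) x z"
  by (simp add: wk_append) blast

lemma wk_snoc[simp]: "wk G (T @ [a]) x z \<longleftrightarrow> wk G T x (tail G a) \<and> head G a = z"
  by (induction T arbitrary: x) auto

definition revarc :: "arc \<Rightarrow> arc" where "revarc a = (snd a, fst a)"
definition rev_tr :: "arc list \<Rightarrow> arc list" where "rev_tr T = rev (map revarc T)"

lemma tail_revarc[simp]: "tail G (revarc a) = head G a" by (simp add: revarc_def tail_def head_def)
lemma head_revarc[simp]: "head G (revarc a) = tail G a" by (simp add: revarc_def tail_def head_def)
lemma arc_edge_revarc[simp]: "arc_edge (revarc a) = arc_edge a" by (auto simp: revarc_def arc_edge_def)
lemma revarc_revarc[simp]: "revarc (revarc a) = a" by (simp add: revarc_def)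

lemma rev_tr_Nil[simp]: "rev_tr [] = []" by (simp add: rev_tr_def)
lemma rev_tr_Cons[simp]: "rev_tr (a # T) = rev_tr T @ [revarc a]" by (simp add: rev_tr_def)
lemma rev_tr_append[simp]: "rev_tr (T @ S) = rev_tr S @ rev_tr T" by (simp add: rev_tr_def)
lemma rev_tr_rev_tr[simp]: "rev_tr (rev_tr T) = T" by (simp add: rev_tr_def rev_map comp_def)
lemma set_rev_tr: "set (rev_tr T) = revarc ` set T" by (simp add: rev_tr_def)
lemma length_rev_tr[simp]: "length (rev_tr T) = length T" by (simp add: rev_tr_def)
lemma rev_tr_Nil_iff[simp]: "rev_tr T = [] \<longleftrightarrow> T = []" by (simp add: rev_tr_def)
lemma map_arc_edge_rev_tr: "map arc_edge (rev_tr T) = rev (map arc_edge T)"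
  by (simp add: rev_tr_def rev_map comp_def)

lemma wk_rev_tr: "wk G T x y \<Longrightarrow> wk G (rev_tr T) y x"
  by (induction T arbitrary: x) (auto intro: wk_append_I)

lemma weight_append[simp]: "weight \<gamma> (T @ S) = weight \<gamma> T + weight \<gamma> S"
  by (simp add: weight_def)
lemma weight_Cons[simp]: "weight \<gamma> (a # T) = \<gamma> (arc_edge a) + weight \<gamma> T"
  by (simp add: weight_def)
lemma weight_Nil[simp]: "weight \<gamma> [] = 0"
  by (simp add: weight_def)
lemma weight_rev_tr[simp]: "weight \<gamma> (rev_tr T) = weight \<gamma> T"
  by (induction T) (auto simp: add.commute)

lemma wf_is_arc_revarc: "wf_graph G \<Longrightarrow> is_arc G a \<Longrightarrow> is_arc G (revarc a)"
  by (auto simp: wf_graph_def is_arc_def revarc_def)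

definition goodarcs :: "'v hgraph \<Rightarrow> arc list \<Rightarrow> bool" where
  "goodarcs G T \<longleftrightarrow> (\<forall>a\<in>set T. is_arc G a) \<and> distinct (map arc_edge T)"

lemma goodarcs_rev_tr: "wf_graph G \<Longrightarrow> goodarcs G T \<Longrightarrow> goodarcs G (rev_tr T)"
  by (auto simp: goodarcs_def set_rev_tr map_arc_edge_rev_tr wf_is_arc_revarc)

lemma is_circuit_iff: "is_circuit G C \<longleftrightarrow> C \<noteq> [] \<and> goodarcs G C \<and> wk G C (tail G (hd C)) (tail G (hd C))"
  by (auto simp: is_circuit_def is_trail_def goodarcs_def wk_def chain_iff trail_head_def trail_tail_def)

lemma is_circuitI: "C \<noteq> [] \<Longrightarrow> goodarcs G C \<Longrightarrow> wk G C x x \<Longrightarrow> is_circuit G C"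
  by (cases C) (auto simp: is_circuit_iff)

lemma is_circuitD: "is_circuit G C \<Longrightarrow> wk G C (trail_tail G C) (trail_tail G C)"
  by (simp add: is_circuit_iff trail_tail_def)

lemma trail_tail_head: "C \<noteq> [] \<Longrightarrow> wk G C x y \<Longrightarrow> trail_tail G C = x \<and> trail_head G C = y"
  by (simp add: wk_def trail_tail_def trail_head_def)

lemma decomp_iff: "circuit_decomposition G D \<longleftrightarrow> (\<forall>C\<in>set D. is_circuit G C) \<and>
   distinct (map arc_edge (concat D)) \<and> arc_edge ` set (concat D) = edges G"
  by (simp add: circuit_decomposition_def map_concat image_UN)

lemma decomp_mset:
  assumes "circuit_decomposition G D" "mset (concat F) = mset (concat D)" "\<forall>C\<in>set F. is_circuit G C"
  shows "circuit_decomposition G F"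
proof -
  have m: "mset (map arc_edge (concat F)) = mset (map arc_edge (concat D))" using assms(2) by simp
  show ?thesis using assms unfolding decomp_iff
    by (metis m mset_eq_imp_distinct_iff mset_eq_setD set_map)
qed


lemma heads_eq: "wk G T x y \<Longrightarrow> T \<noteq> [] \<Longrightarrow> map (head G) T = tl (map (tail G) T) @ [y]"
proof (induction T arbitrary: x)
  case (Cons a T) then show ?case by (cases T) auto
qed simp

lemma closed_heads_sub: "wk G T x x \<Longrightarrow> head G ` set T \<subseteq> tail G ` set T"
proof (cases T)
  case (Cons a R)
  assume w: "wk G T x x"
  have "map (head G) T = tl (map (tail G) T) @ [x]" using heads_eq[OF w] Cons by simp
  then have "head G ` set T = tail G ` set R \<union> {x}" using Cons by (metis list.set_map set_append empty_set list.sel(3) list.simps(15) list.simps(9) Un_insert_right sup_bot.right_neutral)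
  moreover have "x = tail G a" using w Cons by simp
  ultimately show ?thesis using Cons by auto
qed simp

definition bsimple :: "'v hgraph \<Rightarrow> 'v \<Rightarrow> arc list \<Rightarrow> bool" where
  "bsimple G b P \<longleftrightarrow> P \<noteq> [] \<and> wk G P b b \<and> b \<notin> tail G ` set (tl P)"

lemma split_closed:
  "wk G T b b \<Longrightarrow> T \<noteq> [] \<Longrightarrow> \<exists>Ps. concat Ps = T \<and> (\<forall>P\<in>set Ps. bsimple G b P)"
proof (induction "length T" arbitrary: T rule: less_induct)
  case less
  then obtain a R where T: "T = a # R" by (cases T) auto
  show ?case
  proof (cases "\<exists>c\<in>set R. tail G c = b")
    case False
    then have "bsimple G b T" using less T by (auto simp: bsimple_def)
    then show ?thesis by (intro exI[of _ "[T]"]) auto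
  next
    case True
    then obtain A c B where R: "R = A @ c # B" and c: "tail G c = b" and A: "\<forall>y\<in>set A. tail G y \<noteq> b"
      using split_list_first_prop[of R "\<lambda>c. tail G c = b"] by blast
    have w: "wk G (a # A @ c # B) b b" using less T R by simp
    then obtain y where wy1: "wk G (a # A) b y" and wy2: "wk G (c # B) y b"
      using wk_append[of G "a # A" "c # B" b b] by auto
    have "y = b" using wy2 c by simp
    then have w1: "wk G (a # A) b b" and w2: "wk G (c # B) b b" using wy1 wy2 by auto
    have "length (c # B) < length T" using T R by simp
    then obtain Ps where "concat Ps = c # B" "\<forall>P\<in>set Ps. bsimple G b P"
      using less(1) w2 by blast
    moreover have "bsimple G b (a # A)" using w1 A by (auto simp: bsimple_def)
    ultimately show ?thesis using T R by (intro exI[of _ "(a # A) # Ps"]) auto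
  qed
qed

lemma rotate_to_b:
  assumes "is_circuit G C" "hits G C b"
  shows "\<exists>T. mset T = mset C \<and> wk G T b b \<and> T \<noteq> []"
proof -
  let ?x = "trail_tail G C"
  have w: "wk G C ?x ?x" using is_circuitD[OF assms(1)] .
  have "b \<in> tail G ` set C"
    using assms(2) closed_heads_sub[OF w] unfolding hits_def by blast
  then obtain A c B where C: "C = A @ c # B" and c: "tail G c = b"
    by (metis image_iff split_list)
  from w obtain y where wA: "wk G A ?x y" and wB: "wk G (c # B) y ?x"
    unfolding C wk_append by blast
  have "y = b" using wB c by simp
  then have "wk G ((c # B) @ A) b b" using wA wB by (intro wk_append_I) auto
  then show ?thesis using C by (intro exI[of _ "(c # B) @ A"]) auto
qed

lemma num_nonzero_Cons[simp]: "num_nonzero \<gamma> (C # F) = (if weight \<gamma> C \<noteq> 0 then 1 else 0) + num_nonzero \<gamma> F"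
  by (simp add: num_nonzero_def)
lemma num_nonzero_append[simp]: "num_nonzero \<gamma> (F1 @ F2) = num_nonzero \<gamma> F1 + num_nonzero \<gamma> F2"
  by (simp add: num_nonzero_def)
lemma num_nonzero_Nil[simp]: "num_nonzero \<gamma> [] = 0"
  by (simp add: num_nonzero_def)

lemma weight_concat: "weight \<gamma> (concat Ps) = sum_list (map (weight \<gamma>) Ps)"
  by (induction Ps) auto

lemma nz_piece: "weight \<gamma> (concat Ps) \<noteq> 0 \<Longrightarrow> num_nonzero \<gamma> Ps \<ge> 1"
proof (induction Ps)
  case (Cons P Ps) then show ?case by (cases "weight \<gamma> P = 0") auto
qed simp

lemma split_list_circuits:
  assumes "\<forall>C\<in>set D. is_circuit G C \<and> hits G C b"
  shows "\<exists>F. mset (concat F) = mset (concat D) \<and> (\<forall>P\<in>set F. bsimple G b P) \<and> num_nonzero \<gamma> F \<ge> num_nonzero \<gamma> D"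
  using assms
proof (induction D)
  case Nil then show ?case by (intro exI[of _ "[]"]) auto
next
  case (Cons C D)
  then obtain F where F: "mset (concat F) = mset (concat D)" "\<forall>P\<in>set F. bsimple G b P" "num_nonzero \<gamma> F \<ge> num_nonzero \<gamma> D"
    by auto
  obtain T where T: "mset T = mset C" "wk G T b b" "T \<noteq> []" using rotate_to_b Cons(2) by force
  obtain Ps where Ps: "concat Ps = T" "\<forall>P\<in>set Ps. bsimple G b P" using split_closed[OF T(2,3)] by blast
  have wT: "weight \<gamma> T = weight \<gamma> C"
    using T(1) unfolding weight_def by (metis mset_map sum_mset_sum_list)
  have "num_nonzero \<gamma> Ps \<ge> (if weight \<gamma> C \<noteq> 0 then 1 else 0)"
    using nz_piece[of \<gamma> Ps] Ps(1) wT by auto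
  then show ?case using F Ps T
    by (intro exI[of _ "Ps @ F"]) auto
qed

lemma split_decomp:
  assumes "circuit_decomposition G D" "\<forall>C\<in>set D. hits G C b"
  shows "\<exists>F. circuit_decomposition G F \<and> (\<forall>P\<in>set F. bsimple G b P) \<and> num_nonzero \<gamma> F \<ge> num_nonzero \<gamma> D"
proof -
  have c: "\<forall>C\<in>set D. is_circuit G C \<and> hits G C b" using assms by (auto simp: circuit_decomposition_def)
  obtain F where F: "mset (concat F) = mset (concat D)" "\<forall>P\<in>set F. bsimple G b P" "num_nonzero \<gamma> F \<ge> num_nonzero \<gamma> D"
    using split_list_circuits[OF c] by blast
  have d: "distinct (map arc_edge (concat F))" "set (concat F) = set (concat D)"
    using assms(1) F(1) unfolding decomp_iff
    by (metis mset_eq_imp_distinct_iff mset_map, metis mset_eq_setD)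
  have "\<forall>P\<in>set F. is_circuit G P"
  proof
    fix P assume P: "P \<in> set F"
    have "set P \<subseteq> set (concat D)" using P d by auto
    then have arcs: "\<forall>a\<in>set P. is_arc G a" using assms(1) unfolding decomp_iff is_circuit_iff goodarcs_def by auto
    have "distinct (map arc_edge P)" using d(1) P by (auto simp: distinct_map distinct_concat_iff inj_on_def)
    then show "is_circuit G P" using F(2) P arcs by (intro is_circuitI[of P G b]) (auto simp: bsimple_def goodarcs_def)
  qed
  then show ?thesis using decomp_mset[OF assms(1) F(1)] F by blast
qed


lemma sum_list_map_concat: "sum_list (map f (concat xs)) = sum_list (map (\<lambda>x. sum_list (map f x)) xs)"
  by (induction xs) auto

lemma card_two_if: "(p::nat) \<noteq> q \<Longrightarrow> card ((if P then {p} else {}) \<union> (if Q then {q} else {})) = (if P then 1 else 0) + (if Q then 1 else 0)"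
  by (cases P; cases Q) auto

lemma mate_inj: "wf_graph G \<Longrightarrow> x \<in> hedges G \<Longrightarrow> y \<in> hedges G \<Longrightarrow> mate G x = mate G y \<Longrightarrow> x = y"
  by (metis wf_graph_def)

lemma edge_disjoint:
  assumes "wf_graph G" "is_arc G a" "is_arc G a'" "arc_edge a \<inter> arc_edge a' \<noteq> {}"
  shows "arc_edge a = arc_edge a'"
proof -
  obtain x where x: "x \<in> arc_edge a" "x \<in> arc_edge a'" using assms(4) by blast
  have h: "fst a \<in> hedges G" "snd a = mate G (fst a)" "fst a' \<in> hedges G" "snd a' = mate G (fst a')"
    using assms(2,3) by (auto simp: is_arc_def)
  have inv: "\<And>y. y \<in> hedges G \<Longrightarrow> mate G (mate G y) = y \<and> mate G y \<in> hedges G"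
    using assms(1) by (auto simp: wf_graph_def)
  have ea: "arc_edge a = {fst a, mate G (fst a)}" "arc_edge a' = {fst a', mate G (fst a')}"
    using h by (auto simp: arc_edge_def)
  have p: "fst a' = fst a \<or> fst a' = mate G (fst a)"
  proof -
    have "(x = fst a \<or> x = mate G (fst a)) \<and> (x = fst a' \<or> x = mate G (fst a'))" using x unfolding ea by blast
    then show ?thesis using inv[OF h(1)] inv[OF h(3)] by metis
  qed
  then show ?thesis unfolding ea using inv[OF h(1)] by (metis insert_commute)
qed

lemma arc_unique:
  assumes "wf_graph G" "is_arc G a" "is_arc G a'" "arc_edge a = arc_edge a'"
  shows "a' = a \<or> a' = revarc a"
  using assms by (cases a; cases a') (auto simp: wf_graph_def is_arc_def arc_edge_def revarc_def doubleton_eq_iff)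

definition cnt :: "'v hgraph \<Rightarrow> 'v \<Rightarrow> arc \<Rightarrow> nat" where
  "cnt G b a = (if tail G a = b then 1 else 0) + (if head G a = b then 1 else 0)"

lemma hedges_Union: "wf_graph G \<Longrightarrow> hedges G = \<Union> (edges G)"
  by (auto simp: wf_graph_def edges_def)

lemma deg_sum:
  assumes wf: "wf_graph G" and D: "circuit_decomposition G F"
  shows "deg G b = sum_list (map (cnt G b) (concat F))"
proof -
  let ?A = "concat F"
  have arcs: "\<forall>a\<in>set ?A. is_arc G a" and dist: "distinct (map arc_edge ?A)" and E: "arc_edge ` set ?A = edges G"
    using D unfolding decomp_iff is_circuit_iff goodarcs_def by auto
  have S: "{h \<in> hedges G. inc G h = b} = (\<Union>a\<in>set ?A. {x \<in> arc_edge a. inc G x = b})"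
  proof -
    have "hedges G = \<Union>(arc_edge ` set ?A)" using hedges_Union[OF wf] E by simp
    then show ?thesis by blast
  qed
  have fin: "finite (set ?A)" by simp
  have disj: "\<forall>a\<in>set ?A. \<forall>a'\<in>set ?A. a \<noteq> a' \<longrightarrow> {x \<in> arc_edge a. inc G x = b} \<inter> {x \<in> arc_edge a'. inc G x = b} = {}"
  proof (intro ballI impI)
    fix a a' assume a: "a \<in> set ?A" "a' \<in> set ?A" "a \<noteq> a'"
    have "arc_edge a \<noteq> arc_edge a'" using dist a by (auto simp: distinct_map inj_on_def)
    then have "arc_edge a \<inter> arc_edge a' = {}" using edge_disjoint[OF wf] arcs a by blast
    then show "{x \<in> arc_edge a. inc G x = b} \<inter> {x \<in> arc_edge a'. inc G x = b} = {}" by auto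
  qed
  have "deg G b = (\<Sum>a\<in>set ?A. card {x \<in> arc_edge a. inc G x = b})"
    unfolding deg_def S by (rule card_UN_disjoint) (use disj in \<open>auto simp: arc_edge_def\<close>)
  also have "\<dots> = (\<Sum>a\<in>set ?A. cnt G b a)"
  proof (rule sum.cong)
    fix a assume "a \<in> set ?A"
    then have "fst a \<in> hedges G" "snd a = mate G (fst a)" using arcs by (auto simp: is_arc_def)
    then have ne: "fst a \<noteq> snd a" using wf by (auto simp: wf_graph_def)
    have eqs: "{x \<in> arc_edge a. inc G x = b} = (if tail G a = b then {fst a} else {}) \<union> (if head G a = b then {snd a} else {})"
      by (auto simp: arc_edge_def tail_def head_def)
    show "card {x \<in> arc_edge a. inc G x = b} = cnt G b a"
      unfolding eqs cnt_def by (rule card_two_if[OF ne])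
  qed simp
  also have "\<dots> = sum_list (map (cnt G b) ?A)"
    using dist by (simp add: distinct_map sum_list_distinct_conv_sum_set)
  finally show ?thesis .
qed

lemma bsimple_cnt:
  assumes "bsimple G b P"
  shows "sum_list (map (cnt G b) P) = 2"
proof -
  obtain a R where P: "P = a # R" using assms by (cases P) (auto simp: bsimple_def)
  have w: "wk G P b b" and nb: "b \<notin> tail G ` set R" using assms P by (auto simp: bsimple_def)
  have ta: "tail G a = b" using w P by simp
  have hd: "map (head G) P = map (tail G) R @ [b]" using heads_eq[OF w] P by simp
  have "sum_list (map (cnt G b) P) = sum_list (map (\<lambda>v. if v = b then 1 else 0) (map (tail G) P))
       + sum_list (map (\<lambda>v. if v = b then 1 else 0::nat) (map (head G) P))"
    unfolding cnt_def by (simp add: sum_list_addf comp_def)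
  also have "map (\<lambda>v. if v = b then 1 else 0::nat) (map (tail G) R) = map (\<lambda>_. 0) R"
    using nb by auto
  then have "sum_list (map (\<lambda>v. if v = b then 1 else 0) (map (tail G) P)) = (1::nat)"
    using P ta by (simp add: sum_list_triv)
  moreover have "sum_list (map (\<lambda>v. if v = b then 1 else 0::nat) (map (head G) P)) = 1"
    using hd \<open>map (\<lambda>v. if v = b then 1 else 0::nat) (map (tail G) R) = map (\<lambda>_. 0) R\<close>
    by (simp add: sum_list_triv)
  ultimately show ?thesis by simp
qed

lemma flooding_of_bsimple:
  assumes wf: "wf_graph G" and D: "circuit_decomposition G F" and B: "\<forall>P\<in>set F. bsimple G b P"
  shows "flooding G b F"
proof -
  have "deg G b = sum_list (map (\<lambda>P. sum_list (map (cnt G b) P)) F)"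
    using deg_sum[OF wf D] by (simp add: sum_list_map_concat)
  also have "\<dots> = sum_list (map (\<lambda>_. 2) F)"
    using B bsimple_cnt by (metis (mono_tags, lifting) map_eq_conv)
  also have "\<dots> = 2 * length F" by (simp add: sum_list_triv)
  finally have "2 * length F = deg G b" by simp
  moreover have "\<forall>C\<in>set F. trail_tail G C = b \<and> trail_head G C = b"
    using B trail_tail_head by (metis bsimple_def)
  ultimately show ?thesis using D by (simp add: flooding_def)
qed

lemma decomp_mset2:
  assumes D: "circuit_decomposition G D" and M: "mset (concat F) = mset (concat D)"
    and W: "\<forall>C\<in>set F. C \<noteq> [] \<and> (\<exists>x. wk G C x x)"
  shows "circuit_decomposition G F"
proof -
  have d: "distinct (map arc_edge (concat F))" "set (concat F) = set (concat D)"
    using D M unfolding decomp_iff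
    by (metis mset_eq_imp_distinct_iff mset_map, metis mset_eq_setD)
  have "\<forall>P\<in>set F. is_circuit G P"
  proof
    fix P assume P: "P \<in> set F"
    have "set P \<subseteq> set (concat D)" using P d by auto
    then have arcs: "\<forall>a\<in>set P. is_arc G a" using D unfolding decomp_iff is_circuit_iff goodarcs_def by auto
    have "distinct (map arc_edge P)" using d(1) P by (auto simp: distinct_map distinct_concat_iff inj_on_def)
    then show "is_circuit G P" using W P arcs is_circuitI[of P G] by (auto simp: goodarcs_def)
  qed
  then show ?thesis using decomp_mset[OF D M] by blast
qed

lemma length_le_concat: "\<forall>x\<in>set xs. x \<noteq> [] \<Longrightarrow> length xs \<le> length (concat xs)"
proof (induction xs)
  case (Cons x xs) then show ?case by (cases x) auto
qed simp

lemma decomp_length_le: "circuit_decomposition G D \<Longrightarrow> length D \<le> card (edges G)"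
proof -
  assume D: "circuit_decomposition G D"
  let ?L = "concat (map (map arc_edge) D)"
  have "\<forall>x\<in>set (map (map arc_edge) D). x \<noteq> []" using D by (auto simp: circuit_decomposition_def is_circuit_iff)
  then have "length D \<le> length ?L" using length_le_concat[of "map (map arc_edge) D"] by simp
  also have "\<dots> = card (edges G)"
  proof -
    have "distinct ?L" "set ?L = edges G" using D by (simp_all add: circuit_decomposition_def)
    then show ?thesis by (metis distinct_card)
  qed
  finally show ?thesis .
qed

lemma fn_finite: "finite {length D | D. circuit_decomposition G D \<and> (\<forall>C\<in>set D. weight \<gamma> C \<noteq> 0 \<and> hits G C b)}"
  by (rule finite_subset[of _ "{..card (edges G)}"]) (auto dest: decomp_length_le)

lemma fn_ge:
  assumes "circuit_decomposition G D" "\<forall>C\<in>set D. weight \<gamma> C \<noteq> 0 \<and> hits G C b"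
  shows "length D \<le> flooding_number G \<gamma> b"
  unfolding flooding_number_def using assms fn_finite by (intro Max_ge) auto

lemma fn_attained:
  assumes "flooding_number G \<gamma> b \<ge> 1"
  shows "\<exists>D. circuit_decomposition G D \<and> (\<forall>C\<in>set D. weight \<gamma> C \<noteq> 0 \<and> hits G C b) \<and> length D = flooding_number G \<gamma> b"
proof -
  let ?S = "{length D | D. circuit_decomposition G D \<and> (\<forall>C\<in>set D. weight \<gamma> C \<noteq> 0 \<and> hits G C b)}"
  have "Max (insert 0 ?S) \<in> insert 0 ?S" using fn_finite by (intro Max_in) auto
  moreover have "Max (insert 0 ?S) \<noteq> 0" using assms unfolding flooding_number_def by simp
  ultimately have "Max (insert 0 ?S) \<in> ?S" by blast
  then show ?thesis unfolding flooding_number_def by auto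
qed

lemma wk_concat: "\<forall>P\<in>set Ps. wk G P b b \<Longrightarrow> wk G (concat Ps) b b"
  by (induction Ps) (auto intro: wk_append_I)

lemma mset_concat_filter: "mset (concat (filter Q xs)) + mset (concat (filter (\<lambda>x. \<not> Q x) xs)) = mset (concat xs)"
  by (induction xs) auto

lemma sum_zero_weights: "\<forall>C\<in>set xs. weight \<gamma> C = 0 \<Longrightarrow> sum_list (map (weight \<gamma>) xs) = 0"
  by (induction xs) auto

lemma merge_flooding:
  assumes Fl: "flooding G b F" and nz: "num_nonzero \<gamma> F \<ge> 1"
  shows "num_nonzero \<gamma> F \<le> flooding_number G \<gamma> b"
proof -
  let ?N = "filter (\<lambda>C. weight \<gamma> C \<noteq> 0) F" and ?Z = "filter (\<lambda>C. \<not> weight \<gamma> C \<noteq> 0) F"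
  have D: "circuit_decomposition G F" and ends: "\<forall>C\<in>set F. trail_tail G C = b \<and> trail_head G C = b"
    using Fl by (auto simp: flooding_def)
  have wkF: "\<forall>C\<in>set F. C \<noteq> [] \<and> wk G C b b"
  proof
    fix C assume C: "C \<in> set F"
    then have ci: "is_circuit G C" using D by (auto simp: circuit_decomposition_def)
    then have "C \<noteq> []" by (simp add: is_circuit_iff)
    moreover have "wk G C b b" using is_circuitD[OF ci] ends C by auto
    ultimately show "C \<noteq> [] \<and> wk G C b b" by simp
  qed
  have Nne: "?N \<noteq> []" using nz unfolding num_nonzero_def by (metis length_0_conv not_one_le_zero)
  have hNin: "hd ?N \<in> set ?N" using hd_in_set[OF Nne] .
  have hN: "hd ?N \<in> set F" "weight \<gamma> (hd ?N) \<noteq> 0" using hNin by simp_all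
  define C0 where "C0 = hd ?N @ concat ?Z"
  define D' where "D' = C0 # tl ?N"
  have cN: "concat ?N = hd ?N @ concat (tl ?N)" using Nne by (metis concat.simps(2) list.collapse)
  have "mset (concat D') = mset (concat ?N) + mset (concat ?Z)"
    unfolding D'_def C0_def cN by simp
  also have "\<dots> = mset (concat F)" by (rule mset_concat_filter)
  finally have M: "mset (concat D') = mset (concat F)" .
  have wZ: "wk G (concat ?Z) b b" by (rule wk_concat) (use wkF in auto)
  have hN2: "hd ?N \<noteq> [] \<and> wk G (hd ?N) b b" using wkF hN(1) by blast
  have wC0: "wk G C0 b b" unfolding C0_def using hN2 wZ by (intro wk_append_I) auto
  have C0ne: "C0 \<noteq> []" using hN2 by (simp add: C0_def)
  have tlN: "\<forall>C\<in>set (tl ?N). C \<in> set F \<and> weight \<gamma> C \<noteq> 0"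
  proof
    fix C assume "C \<in> set (tl ?N)"
    then have "C \<in> set ?N" using list.set_sel(2)[OF Nne] by blast
    then show "C \<in> set F \<and> weight \<gamma> C \<noteq> 0" by simp
  qed
  have wD: "\<forall>C\<in>set D'. C \<noteq> [] \<and> wk G C b b"
  proof
    fix C assume "C \<in> set D'"
    then have "C = C0 \<or> C \<in> set (tl ?N)" unfolding D'_def by simp
    then show "C \<noteq> [] \<and> wk G C b b"
    proof
      assume "C \<in> set (tl ?N)"
      then have "C \<in> set F" using tlN by blast
      then show ?thesis using wkF by blast
    qed (use wC0 C0ne in blast)
  qed
  have cd: "circuit_decomposition G D'"
    by (rule decomp_mset2[OF D M]) (use wD in blast)
  have wC0nz: "weight \<gamma> C0 \<noteq> 0"
  proof -
    have "\<forall>C\<in>set ?Z. weight \<gamma> C = 0" by auto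
    then have "sum_list (map (weight \<gamma>) ?Z) = 0" by (rule sum_zero_weights)
    then show ?thesis using hN unfolding C0_def by (simp add: weight_concat)
  qed
  have hitsD: "\<forall>C\<in>set D'. hits G C b"
  proof
    fix C assume "C \<in> set D'"
    then have "C \<noteq> []" "wk G C b b" using wD by auto
    then have "hd C \<in> set C" "tail G (hd C) = b" by (auto simp: wk_def)
    then show "hits G C b" unfolding hits_def by blast
  qed
  have nzD: "\<forall>C\<in>set D'. weight \<gamma> C \<noteq> 0"
  proof
    fix C assume "C \<in> set D'"
    then have "C = C0 \<or> C \<in> set (tl ?N)" unfolding D'_def by simp
    then show "weight \<gamma> C \<noteq> 0" using wC0nz tlN by blast
  qed
  have "length D' \<le> flooding_number G \<gamma> b"
    by (rule fn_ge[OF cd]) (use hitsD nzD in blast)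
  moreover have "length D' = length ?N"
    unfolding D'_def using Nne by (metis length_Cons list.collapse)
  ultimately show ?thesis unfolding num_nonzero_def by linarith
qed


lemma bit_cases2: "(x::bit) = 0 \<or> x = 1" by (cases x) auto

lemma mset_concat_remove1:
  "C \<in> set F \<Longrightarrow> mset (map g (concat F)) = mset (map g C) + mset (map g (concat (remove1 C F)))"
  by (induction F) auto

lemma num_nonzero_remove1:
  "C \<in> set F \<Longrightarrow> num_nonzero \<gamma> F = (if weight \<gamma> C \<noteq> 0 then 1 else 0) + num_nonzero \<gamma> (remove1 C F)"
  by (induction F) auto

lemma distinct_mset_disj: "distinct xs \<Longrightarrow> mset xs = M + N \<Longrightarrow> x \<in># M \<Longrightarrow> x \<notin># N"
proof -
  assume d: "distinct xs" and m: "mset xs = M + N" and x: "x \<in># M"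
  have "count (mset xs) x \<le> 1" using d by (simp add: distinct_count_atmost_1)
  then have "count M x + count N x \<le> 1" using m by simp
  moreover have "count M x > 0" using x by simp
  ultimately have "count N x = 0" by linarith
  then show "x \<notin># N" by (simp add: not_in_iff)
qed

locale red =
  fixes G :: "'v hgraph" and b :: 'v and h r h' r' :: nat and \<gamma> \<gamma>' :: signature
  assumes wf: "wf_graph G" and bV: "b \<in> verts G"
    and hH: "h \<in> hedges G" and rdef: "r = mate G h"
    and hb: "inc G h \<noteq> b" and rb: "inc G r \<noteq> b"
    and h'n: "h' \<notin> hedges G" and r'n: "r' \<notin> hedges G" and hr': "h' \<noteq> r'"
    and \<gamma>o: "\<forall>e\<in>edges G - {{h, r}}. \<gamma>' e = \<gamma> e"
    and \<gamma>n: "\<gamma>' {h, h'} + \<gamma>' {r, r'} = \<gamma> {h, r}"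
begin

definition G' :: "'v hgraph" where
  "G' = \<lparr>verts = verts G, hedges = hedges G \<union> {h', r'}, inc = (inc G)(h' := b, r' := b),
         mate = (mate G)(h := h', h' := h, r := r', r' := r)\<rparr>"

lemma rH: "r \<in> hedges G" and hr: "h \<noteq> r" and mr: "mate G r = h"
  using wf hH rdef by (auto simp: wf_graph_def)

lemma dif: "h \<noteq> h'" "h \<noteq> r'" "r \<noteq> h'" "r \<noteq> r'"
  using hH rH h'n r'n by auto

lemma G'_simps[simp]: "verts G' = verts G" "hedges G' = hedges G \<union> {h', r'}"
  by (simp_all add: G'_def)

lemma G'_im: "inc G' = (inc G)(h' := b, r' := b)" "mate G' = (mate G)(h := h', h' := h, r := r', r' := r)"
  by (simp_all add: G'_def)

lemma mate'_h[simp]: "mate G' h = h'" "mate G' h' = h" "mate G' r = r'" "mate G' r' = r"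
  using dif hr hr' by (auto simp: G'_im)

lemma mate'_other[simp]: "x \<notin> {h, r, h', r'} \<Longrightarrow> mate G' x = mate G x"
  by (auto simp: G'_im)

lemma inc'_simps[simp]: "inc G' h' = b" "inc G' r' = b" "x \<notin> {h', r'} \<Longrightarrow> inc G' x = inc G x"
  using hr' by (auto simp: G'_im)

lemma mate_other: "x \<in> hedges G \<Longrightarrow> x \<notin> {h, r} \<Longrightarrow> mate G x \<notin> {h, r, h', r'} \<and> mate G x \<in> hedges G"
proof -
  assume x: "x \<in> hedges G" "x \<notin> {h, r}"
  have inv: "mate G (mate G x) = x" "mate G x \<in> hedges G" using wf x by (auto simp: wf_graph_def)
  have "mate G x \<noteq> h" using inv x rdef by auto
  moreover have "mate G x \<noteq> r" using inv x mr by auto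
  ultimately show ?thesis using inv h'n r'n by auto
qed

lemma wf': "wf_graph G'"
  unfolding wf_graph_def
proof (intro conjI ballI)
  show "finite (verts G')" "finite (hedges G')" using wf by (auto simp: wf_graph_def)
next
  fix x assume x: "x \<in> hedges G'"
  have "x = h' \<or> x = r' \<or> (x \<in> hedges G \<and> x \<notin> {h', r'})" using x by auto
  then show "inc G' x \<in> verts G'"
  proof (elim disjE)
    assume "x \<in> hedges G \<and> x \<notin> {h', r'}"
    then show ?thesis using wf by (simp add: wf_graph_def)
  qed (use bV in simp_all)
  show "mate G' x \<in> hedges G'" "mate G' x \<noteq> x" "mate G' (mate G' x) = x"
  proof -
    have "(x = h \<or> x = r \<or> x = h' \<or> x = r') \<or> (x \<in> hedges G \<and> x \<notin> {h, r, h', r'})" using x by auto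
    then have "mate G' x \<in> hedges G' \<and> mate G' x \<noteq> x \<and> mate G' (mate G' x) = x"
    proof
      assume "x \<in> hedges G \<and> x \<notin> {h, r, h', r'}"
      moreover then have "mate G x \<notin> {h, r, h', r'} \<and> mate G x \<in> hedges G" using mate_other by auto
      moreover have "mate G x \<noteq> x" "mate G (mate G x) = x" using wf calculation by (auto simp: wf_graph_def)
      ultimately show ?thesis using mate'_other by simp
    qed (use dif hr hr' hH rH in auto)
    then show "mate G' x \<in> hedges G'" "mate G' x \<noteq> x" "mate G' (mate G' x) = x" by auto
  qed
qed

lemma deg': "deg G' b = deg G b + 2"
proof -
  have "{x \<in> hedges G'. inc G' x = b} = insert h' (insert r' {x \<in> hedges G. inc G x = b})"
    using hr' h'n r'n by (auto simp: G'_im)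
  moreover have "finite {x \<in> hedges G. inc G x = b}" using wf by (auto simp: wf_graph_def)
  ultimately show ?thesis unfolding deg_def using h'n r'n hr' by simp
qed

definition oldarc :: "arc \<Rightarrow> bool" where
  "oldarc a \<longleftrightarrow> is_arc G a \<and> fst a \<notin> {h, r, h', r'} \<and> snd a \<notin> {h, r, h', r'}"

lemma arc'_cases:
  assumes "is_arc G' a"
  shows "arc_edge a = {h, h'} \<or> arc_edge a = {r, r'} \<or> oldarc a"
proof -
  have a: "fst a \<in> hedges G \<union> {h', r'}" "snd a = mate G' (fst a)" using assms by (auto simp: is_arc_def)
  show ?thesis
  proof (cases "fst a \<in> {h, r, h', r'}")
    case True then have "fst a = h \<or> fst a = r \<or> fst a = h' \<or> fst a = r'" by simp
    then have "arc_edge a = {h, h'} \<or> arc_edge a = {r, r'}"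
    proof (elim disjE)
      assume "fst a = h'" then have "arc_edge a = {h', h}" using a by (simp add: arc_edge_def)
      then show ?thesis by (simp add: insert_commute)
    next
      assume "fst a = r'" then have "arc_edge a = {r', r}" using a by (simp add: arc_edge_def)
      then show ?thesis by (simp add: insert_commute)
    qed (use a in \<open>simp_all add: arc_edge_def\<close>)
    then show ?thesis by blast
  next
    case False
    then have "fst a \<in> hedges G" "snd a = mate G (fst a)" using a by auto
    moreover then have "snd a \<notin> {h, r, h', r'}" using mate_other False by auto
    ultimately show ?thesis using False by (auto simp: oldarc_def is_arc_def)
  qed
qed

lemma oldarc_props:
  assumes "oldarc a"
  shows "is_arc G a" "is_arc G' a" "tail G' a = tail G a" "head G' a = head G a"
    "arc_edge a \<in> edges G" "arc_edge a \<noteq> {h, r}" "oldarc (revarc a)"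
    "arc_edge a \<noteq> {h, h'}" "arc_edge a \<noteq> {r, r'}"
proof -
  have a: "fst a \<in> hedges G" "snd a = mate G (fst a)" "fst a \<notin> {h, r, h', r'}" "snd a \<notin> {h, r, h', r'}"
    using assms by (auto simp: oldarc_def is_arc_def)
  show "is_arc G a" using assms by (simp add: oldarc_def)
  show "is_arc G' a" using a by (auto simp: is_arc_def)
  show "tail G' a = tail G a" "head G' a = head G a" using a by (simp_all add: tail_def head_def)
  show "arc_edge a \<in> edges G" using a by (auto simp: arc_edge_def edges_def)
  show "arc_edge a \<noteq> {h, r}" "arc_edge a \<noteq> {h, h'}" "arc_edge a \<noteq> {r, r'}"
    using a by (auto simp: arc_edge_def doubleton_eq_iff)
  have "mate G (snd a) = fst a" "snd a \<in> hedges G" using a wf by (auto simp: wf_graph_def)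
  then show "oldarc (revarc a)" using a by (auto simp: oldarc_def is_arc_def revarc_def)
qed

lemma wk_old: "\<forall>a\<in>set T. oldarc a \<Longrightarrow> wk G' T x y \<longleftrightarrow> wk G T x y"
  by (induction T arbitrary: x) (auto simp: oldarc_props)

lemma weight_old: "\<forall>a\<in>set T. oldarc a \<Longrightarrow> weight \<gamma>' T = weight \<gamma> T"
  by (induction T) (auto simp: oldarc_props \<gamma>o)

lemma edges': "edges G' = (edges G - {{h, r}}) \<union> {{h, h'}, {r, r'}}"
proof
  show "edges G' \<subseteq> (edges G - {{h, r}}) \<union> {{h, h'}, {r, r'}}"
  proof
    fix e assume "e \<in> edges G'"
    then obtain x where x: "x \<in> hedges G \<union> {h', r'}" "e = {x, mate G' x}" by (auto simp: edges_def)
    show "e \<in> (edges G - {{h, r}}) \<union> {{h, h'}, {r, r'}}"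
    proof (cases "x \<in> {h, r, h', r'}")
      case True then have "x = h \<or> x = r \<or> x = h' \<or> x = r'" by simp
      then have "e = {h, h'} \<or> e = {r, r'}"
      proof (elim disjE)
        assume "x = h'" then have "e = {h', h}" using x by simp
        then show ?thesis by (simp add: insert_commute)
      next
        assume "x = r'" then have "e = {r', r}" using x by simp
        then show ?thesis by (simp add: insert_commute)
      qed (use x in simp_all)
      then show ?thesis by blast
    next
      case False
      then have "x \<in> hedges G" "mate G' x = mate G x" "mate G x \<notin> {h, r, h', r'}" using x mate_other by auto
      then have "e \<in> edges G" "e \<noteq> {h, r}" using x False by (auto simp: edges_def doubleton_eq_iff)
      then show ?thesis by simp
    qed
  qed
next
  show "(edges G - {{h, r}}) \<union> {{h, h'}, {r, r'}} \<subseteq> edges G'"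
  proof
    fix e assume e: "e \<in> (edges G - {{h, r}}) \<union> {{h, h'}, {r, r'}}"
    show "e \<in> edges G'"
    proof (cases "e \<in> {{h, h'}, {r, r'}}")
      case True
      have "{h, h'} = {h, mate G' h}" "h \<in> hedges G'" "{r, r'} = {r, mate G' r}" "r \<in> hedges G'"
        using hH rH by auto
      then have "{h, h'} \<in> edges G'" "{r, r'} \<in> edges G'" unfolding edges_def by blast+
      then show ?thesis using True by auto
    next
      case False
      then obtain x where x: "x \<in> hedges G" "e = {x, mate G x}" "e \<noteq> {h, r}" using e by (auto simp: edges_def)
      have "x \<noteq> h" using x rdef by auto
      moreover have "x \<noteq> r"
      proof
        assume "x = r" then have "e = {r, h}" using x mr by simp
        then show False using x by (simp add: insert_commute)
      qed
      ultimately have "x \<notin> {h, r, h', r'}" using x h'n r'n by auto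
      then have "mate G' x = mate G x" by simp
      then have "e = {x, mate G' x}" "x \<in> hedges G'" using x by simp_all
      then show ?thesis unfolding edges_def by blast
    qed
  qed
qed

lemma hr_notin_edges': "{h, r} \<notin> edges G'"
  using edges' dif hr by (auto simp: doubleton_eq_iff)

lemma new_in_edges': "{h, h'} \<in> edges G'" "{r, r'} \<in> edges G'"
  using edges' by auto

lemma new_notin_edges: "{h, h'} \<notin> edges G" "{r, r'} \<notin> edges G"
  using hedges_Union[OF wf] h'n r'n by auto

lemma new_neq: "{h, h'} \<noteq> {r, r'}" "{h, h'} \<noteq> {h, r}" "{r, r'} \<noteq> {h, r}"
  using dif hr hr' by (auto simp: doubleton_eq_iff)

lemma arcs_new: "is_arc G' (h', h)" "is_arc G' (h, h')" "is_arc G' (r', r)" "is_arc G' (r, r')"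
  using hH rH by (auto simp: is_arc_def)

lemma f_arc: "is_arc G (h, r)" using hH rdef by (simp add: is_arc_def)

end


lemma map_tail_rev_tr: "map (tail G) (rev_tr T) = rev (map (head G) T)"
  by (simp add: rev_tr_def rev_map comp_def)

lemma hd_rev_tr: "T \<noteq> [] \<Longrightarrow> hd (rev_tr T) = revarc (last T)"
  by (simp add: rev_tr_def hd_rev last_map)

lemma bsimple_heads:
  assumes "bsimple G b C"
  shows "map (head G) C = map (tail G) (tl C) @ [b]"
  using assms heads_eq[of G C b b] by (simp add: bsimple_def map_tl)

lemma bsimple_rev:
  assumes B: "bsimple G b C"
  shows "bsimple G b (rev_tr C)"
proof -
  have w: "wk G C b b" and ne: "C \<noteq> []" and nb: "b \<notin> tail G ` set (tl C)" using B by (auto simp: bsimple_def)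
  have "map (tail G) (rev_tr C) = b # rev (map (tail G) (tl C))"
    using bsimple_heads[OF B] by (simp add: map_tail_rev_tr)
  then have "map (tail G) (tl (rev_tr C)) = rev (map (tail G) (tl C))"
    by (metis list.sel(3) map_tl)
  then have "b \<notin> tail G ` set (tl (rev_tr C))" using nb
    by (metis list.set_map set_rev)
  then show ?thesis using wk_rev_tr[OF w] ne by (simp add: bsimple_def)
qed

lemma bsimple_first:
  assumes "bsimple G b C" "a \<in> set C" "tail G a = b"
  shows "a = hd C"
  using assms by (cases C) (auto simp: bsimple_def)

lemma bsimple_last:
  assumes B: "bsimple G b C" and a: "a \<in> set C" "head G a = b"
  shows "a = last C"
proof (rule ccontr)
  assume na: "a \<noteq> last C"
  have ne: "C \<noteq> []" using B by (simp add: bsimple_def)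
  have "a \<in> set (butlast C)" using a na ne by (metis append_butlast_last_id rotate1.simps(2) set_ConsD set_rotate1)
  then have "b \<in> set (map (head G) (butlast C))" using a by auto
  moreover have "map (head G) (butlast C) = map (tail G) (tl C)"
    using bsimple_heads[OF B] by (metis butlast_snoc map_butlast)
  ultimately show False using B by (simp add: bsimple_def)
qed

lemma rotate_at:
  assumes wQ: "wk G Q z z" and x: "x \<in> tail G ` set Q"
  shows "\<exists>Qp Qs. mset (Qp @ Qs) = mset Q \<and> Qp \<noteq> [] \<and> last Qp = last Q \<and> wk G Qp x z \<and> wk G Qs z x"
proof -
  obtain Q1 q Q2 where Q: "Q = Q1 @ q # Q2" and q: "tail G q = x"
    using x by (metis image_iff split_list)
  obtain y where "wk G Q1 z y" "wk G (q # Q2) y z" using wQ unfolding Q wk_append by blast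
  moreover then have "y = x" using q by simp
  ultimately show ?thesis using Q by (intro exI[of _ "q # Q2"] exI[of _ Q1]) auto
qed

lemma glue_index:
  assumes "Qp \<noteq> []"
  shows "(X @ Qp @ R) ! (length X + length Qp - 1) = last Qp"
    "take (Suc (length X + length Qp - 1)) (X @ Qp @ R) = X @ Qp"
    "length X + length Qp - 1 < length (X @ Qp @ R)"
proof -
  obtain k where k: "length Qp = Suc k" using assms by (cases Qp) auto
  have e: "length X + length Qp - 1 = length X + k" using k by simp
  have l: "last Qp = Qp ! k" using k assms by (simp add: last_conv_nth)
  show "(X @ Qp @ R) ! (length X + length Qp - 1) = last Qp"
    unfolding e l by (simp add: nth_append k)
  show "take (Suc (length X + length Qp - 1)) (X @ Qp @ R) = X @ Qp"
    unfolding e using k by simp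
  show "length X + length Qp - 1 < length (X @ Qp @ R)" using k by simp
qed


abbreviation EE :: "arc list \<Rightarrow> nat set multiset" where "EE T \<equiv> mset (map arc_edge T)"

lemma count_le1_distinct: "(\<forall>x. count (mset xs) x = (if x \<in> S then 1 else 0)) \<Longrightarrow> distinct xs \<and> set xs = S"
proof -
  assume c: "\<forall>x. count (mset xs) x = (if x \<in> S then 1 else 0)"
  have s: "set xs = S"
  proof
    show "set xs \<subseteq> S" using c by (metis count_mset_0_iff subsetI zero_neq_one)
    show "S \<subseteq> set xs" using c by (metis count_mset_0_iff subsetI zero_neq_one)
  qed
  then have "distinct xs" using c by (simp add: distinct_count_atmost_1)
  then show ?thesis using s by simp
qed

context red
begin

lemma ae_new[simp]: "arc_edge (h', h) = {h, h'}" "arc_edge (h, h') = {h, h'}" "arc_edge (r', r) = {r, r'}"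
  "arc_edge (r, r') = {r, r'}" "arc_edge (h, r) = {h, r}"
  by (auto simp: arc_edge_def)

lemma e_in_edges: "{h, r} \<in> edges G"
  using hH rdef unfolding edges_def by blast

lemma decomp_G:
  assumes Fd: "circuit_decomposition G' F'"
    and M: "EE (concat F) + {#{h, h'}, {r, r'}#} = EE (concat F') + {#{h, r}#}"
    and C: "\<forall>C\<in>set F. C \<noteq> [] \<and> wk G C b b \<and> (\<forall>a\<in>set C. is_arc G a)"
  shows "circuit_decomposition G F"
proof -
  let ?L = "map arc_edge (concat F)" and ?L' = "map arc_edge (concat F')"
  have d': "distinct ?L'" "set ?L' = edges G'" using Fd unfolding decomp_iff by auto
  have cL': "\<forall>x. count (mset ?L') x = (if x \<in> edges G' then 1 else 0)"
    using d' by (simp add: distinct_count_atmost_1)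
  have cnt: "\<And>x. count (mset ?L) x + count {#{h, h'}, {r, r'}#} x = count (mset ?L') x + count {#{h, r}#} x"
    using M by (metis count_union)
  have cL: "\<forall>x. count (mset ?L) x = (if x \<in> edges G then 1 else 0)"
  proof
    fix x
    have "x = {h, r} \<or> x = {h, h'} \<or> x = {r, r'} \<or> x \<notin> {{h, r}, {h, h'}, {r, r'}}" by blast
    then show "count (mset ?L) x = (if x \<in> edges G then 1 else 0)"
    proof (elim disjE)
      assume x: "x = {h, r}"
      show ?thesis using cnt[of x] cL' x hr_notin_edges' e_in_edges new_neq by auto
    next
      assume x: "x = {h, h'}"
      show ?thesis using cnt[of x] cL' x new_in_edges' new_notin_edges new_neq by auto
    next
      assume x: "x = {r, r'}"
      show ?thesis using cnt[of x] cL' x new_in_edges' new_notin_edges new_neq by auto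
    next
      assume x: "x \<notin> {{h, r}, {h, h'}, {r, r'}}"
      then have iff: "x \<in> edges G' \<longleftrightarrow> x \<in> edges G" using edges' by auto
      have z: "count {#{h, h'}, {r, r'}#} x = 0" "count {#{h, r}#} x = 0" using x by auto
      have "count (mset ?L) x = count (mset ?L') x" using cnt[of x] unfolding z by simp
      then show ?thesis using cL' iff by simp
    qed
  qed
  have dL: "distinct ?L" "set ?L = edges G" using count_le1_distinct[OF cL] by auto
  have "\<forall>C\<in>set F. is_circuit G C"
  proof
    fix C assume CF: "C \<in> set F"
    have "distinct (map arc_edge C)" using dL(1) CF by (auto simp: distinct_map distinct_concat_iff inj_on_def)
    then show "is_circuit G C" using C CF is_circuitI[of C G b] by (auto simp: goodarcs_def)
  qed
  then show ?thesis using dL unfolding decomp_iff by simp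
qed

lemma arc_in_F':
  assumes Fd: "circuit_decomposition G' F'" and e: "e \<in> edges G'"
  shows "\<exists>C\<in>set F'. \<exists>a\<in>set C. arc_edge a = e \<and> is_arc G' a"
proof -
  have "e \<in> arc_edge ` set (concat F')" using Fd e unfolding decomp_iff by auto
  then obtain a C where "C \<in> set F'" "a \<in> set C" "arc_edge a = e" by auto
  moreover then have "is_arc G' a" using Fd unfolding decomp_iff is_circuit_iff goodarcs_def by blast
  ultimately show ?thesis by blast
qed

lemma orient_h:
  assumes B: "bsimple G' b C" and a: "a \<in> set C" "is_arc G' a" "arc_edge a = {h, h'}"
  shows "\<exists>Co. bsimple G' b Co \<and> hd Co = (h', h) \<and> (Co = C \<or> Co = rev_tr C)"
proof -
  have "a = (h', h) \<or> a = revarc (h', h)" using arc_unique[OF wf' arcs_new(1) a(2)] a(3) by simp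
  then show ?thesis
  proof
    assume a1: "a = (h', h)"
    have "tail G' a = b" using a1 by (simp add: tail_def)
    then have "a = hd C" using bsimple_first[OF B a(1)] by simp
    then show ?thesis using B a1 by blast
  next
    assume a1: "a = revarc (h', h)"
    have "head G' a = b" using a1 by (simp add: head_def revarc_def)
    then have "a = last C" using bsimple_last[OF B a(1)] by simp
    moreover have "C \<noteq> []" using B by (simp add: bsimple_def)
    ultimately have "hd (rev_tr C) = (h', h)" using a1 hd_rev_tr by (metis revarc_revarc)
    then show ?thesis using bsimple_rev[OF B] by blast
  qed
qed

lemma orient_r:
  assumes B: "bsimple G' b C" and a: "a \<in> set C" "is_arc G' a" "arc_edge a = {r, r'}"
  shows "\<exists>Co. bsimple G' b Co \<and> hd Co = (r', r) \<and> (Co = C \<or> Co = rev_tr C)"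
proof -
  have "a = (r', r) \<or> a = revarc (r', r)" using arc_unique[OF wf' arcs_new(3) a(2)] a(3) by simp
  then show ?thesis
  proof
    assume a1: "a = (r', r)"
    have "tail G' a = b" using a1 by (simp add: tail_def)
    then have "a = hd C" using bsimple_first[OF B a(1)] by simp
    then show ?thesis using B a1 by blast
  next
    assume a1: "a = revarc (r', r)"
    have "head G' a = b" using a1 by (simp add: head_def revarc_def)
    then have "a = last C" using bsimple_last[OF B a(1)] by simp
    moreover have "C \<noteq> []" using B by (simp add: bsimple_def)
    ultimately have "hd (rev_tr C) = (r', r)" using a1 hd_rev_tr by (metis revarc_revarc)
    then show ?thesis using bsimple_rev[OF B] by blast
  qed
qed

lemma Co_props:
  assumes "Co = C \<or> Co = rev_tr C"
  shows "EE Co = EE C" "weight \<gamma>' Co = weight \<gamma>' C" "\<And>a. a \<in> set Co \<Longrightarrow> a \<in> set C \<or> revarc a \<in> set C"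
proof -
  have "EE (rev_tr C) = EE C" by (simp only: map_arc_edge_rev_tr mset_rev)
  then show "EE Co = EE C" using assms by auto
  show "weight \<gamma>' Co = weight \<gamma>' C" using assms by auto
  fix a assume "a \<in> set Co" then show "a \<in> set C \<or> revarc a \<in> set C"
    using assms by (auto simp: set_rev_tr)
qed

lemma finish:
  assumes Fd: "circuit_decomposition G' F'" and Fb: "\<forall>C\<in>set F'. bsimple G' b C"
    and K: "num_nonzero \<gamma>' F' \<ge> flooding_number G \<gamma> b + 2"
    and AB: "A \<in> set F'" "B \<in> set F'" "A \<noteq> B"
    and nAB: "{h, h'} \<in># EE A + EE B" "{r, r'} \<in># EE A + EE B"
    and NE: "EE N + {#{h, h'}, {r, r'}#} = EE A + EE B + {#{h, r}#}"
    and Nw: "weight \<gamma> N = weight \<gamma>' A + weight \<gamma>' B"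
    and Nwk: "N \<noteq> []" "wk G N b b" "\<forall>a\<in>set N. is_arc G a"
  shows "flooding G b (N # remove1 B (remove1 A F')) \<and> weight \<gamma>' A \<noteq> 0 \<and> weight \<gamma>' B \<noteq> 0 \<and>
    num_nonzero \<gamma> (N # remove1 B (remove1 A F')) \<ge> flooding_number G \<gamma> b"
proof -
  define R where "R = remove1 B (remove1 A F')"
  have B1: "B \<in> set (remove1 A F')" using AB by (simp add: in_set_remove1)
  have RF: "set R \<subseteq> set F'" unfolding R_def by (meson order_trans set_remove1_subset)
  have EF: "EE (concat F') = EE A + EE B + EE (concat R)"
    unfolding R_def mset_concat_remove1[OF AB(1), of arc_edge] mset_concat_remove1[OF B1, of arc_edge]
    by (simp only: add.assoc)
  have dist: "distinct (map arc_edge (concat F'))" using Fd unfolding decomp_iff by simp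
  have nR: "{h, h'} \<notin># EE (concat R)" "{r, r'} \<notin># EE (concat R)"
    using distinct_mset_disj[OF dist _ nAB(1)] distinct_mset_disj[OF dist _ nAB(2)] EF by auto
  have Rold: "\<forall>C\<in>set R. \<forall>a\<in>set C. oldarc a"
  proof (intro ballI)
    fix C a assume C: "C \<in> set R" and a: "a \<in> set C"
    have "is_arc G' a" using Fd C a RF unfolding decomp_iff is_circuit_iff goodarcs_def by blast
    moreover have "arc_edge a \<noteq> {h, h'}" "arc_edge a \<noteq> {r, r'}" using nR C a by auto
    ultimately show "oldarc a" using arc'_cases by blast
  qed
  have Rc: "\<forall>C\<in>set R. C \<noteq> [] \<and> wk G C b b \<and> (\<forall>a\<in>set C. is_arc G a)"
  proof
    fix C assume C: "C \<in> set R"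
    then have "bsimple G' b C" using Fb RF by blast
    then show "C \<noteq> [] \<and> wk G C b b \<and> (\<forall>a\<in>set C. is_arc G a)"
      using wk_old Rold C oldarc_props(1) by (auto simp: bsimple_def)
  qed
  have Rw: "num_nonzero \<gamma> R = num_nonzero \<gamma>' R"
  proof -
    have "filter (\<lambda>C. weight \<gamma> C \<noteq> 0) R = filter (\<lambda>C. weight \<gamma>' C \<noteq> 0) R"
      using weight_old Rold by (intro filter_cong) auto
    then show ?thesis by (simp add: num_nonzero_def)
  qed
  have M: "EE (concat (N # R)) + {#{h, h'}, {r, r'}#} = EE (concat F') + {#{h, r}#}"
    using NE EF by (simp add: add_ac add_mset_commute)
  have cd: "circuit_decomposition G (N # R)"
    using decomp_G[OF Fd M] Rc Nwk by auto
  have lenF': "length F' = length R + 2"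
  proof -
    have l1: "length (remove1 A F') = length F' - 1" using AB(1) by (simp add: length_remove1)
    have l2: "length R = length (remove1 A F') - 1" using B1 unfolding R_def by (simp add: length_remove1)
    have "length (remove1 A F') > 0" using B1 by (metis length_pos_if_in_set)
    then show ?thesis using l1 l2 by linarith
  qed
  have "2 * length F' = deg G' b" using flooding_of_bsimple[OF wf' Fd Fb] by (simp add: flooding_def)
  then have "2 * length (N # R) = deg G b" using lenF' deg' by simp
  moreover have "\<forall>C\<in>set (N # R). trail_tail G C = b \<and> trail_head G C = b"
    using Rc Nwk trail_tail_head by (metis set_ConsD)
  ultimately have fl: "flooding G b (N # R)" using cd by (simp add: flooding_def)
  have nF': "num_nonzero \<gamma>' F' = (if weight \<gamma>' A \<noteq> 0 then 1 else 0) + (if weight \<gamma>' B \<noteq> 0 then 1 else 0) + num_nonzero \<gamma>' R"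
    using num_nonzero_remove1[OF AB(1), of \<gamma>'] num_nonzero_remove1[OF B1, of \<gamma>'] unfolding R_def by simp
  have nF: "num_nonzero \<gamma> (N # R) = (if weight \<gamma> N \<noteq> 0 then 1 else 0) + num_nonzero \<gamma>' R"
    using Rw by simp
  have bnd: "num_nonzero \<gamma> (N # R) \<ge> 1 \<Longrightarrow> num_nonzero \<gamma> (N # R) \<le> flooding_number G \<gamma> b"
    using merge_flooding[OF fl] by blast
  have wA: "weight \<gamma>' A = 1" and wB: "weight \<gamma>' B = 1"
  proof -
    have "weight \<gamma>' A = 1 \<and> weight \<gamma>' B = 1"
    proof (rule ccontr)
      assume "\<not> (weight \<gamma>' A = 1 \<and> weight \<gamma>' B = 1)"
      then have "num_nonzero \<gamma> (N # R) \<ge> num_nonzero \<gamma>' F' - 1"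
        using nF nF' Nw bit_cases2[of "weight \<gamma>' A"] bit_cases2[of "weight \<gamma>' B"] by auto
      then show False using bnd K by linarith
    qed
    then show "weight \<gamma>' A = 1" "weight \<gamma>' B = 1" by auto
  qed
  have "weight \<gamma> N = 0" using Nw wA wB by simp
  then have "num_nonzero \<gamma> (N # R) \<ge> flooding_number G \<gamma> b" using nF nF' wA wB K by simp
  then show ?thesis using fl wA wB unfolding R_def by simp
qed

end


lemma EE_rev_tr[simp]: "EE (rev_tr T) = EE T" by (simp only: map_arc_edge_rev_tr mset_rev)
lemma EE_rev_tr'[simp]: "image_mset arc_edge (mset (rev_tr T)) = image_mset arc_edge (mset T)"
  using EE_rev_tr[of T] by (simp only: mset_map)

context red
begin

lemma arcs_of_Co:
  assumes Fd: "circuit_decomposition G' F'" and C: "C \<in> set F'" and Co: "Co = C \<or> Co = rev_tr C"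
    and a: "a \<in> set Co"
  shows "is_arc G' a"
proof -
  have "\<forall>x\<in>set C. is_arc G' x" using Fd C unfolding decomp_iff is_circuit_iff goodarcs_def by blast
  then show ?thesis using Co_props(3)[OF Co a] wf_is_arc_revarc[OF wf'] by (metis revarc_revarc)
qed

lemma EF2:
  assumes "A \<in> set F'" "B \<in> set F'" "A \<noteq> B"
  shows "EE (concat F') = EE A + EE B + EE (concat (remove1 B (remove1 A F')))"
proof -
  have B1: "B \<in> set (remove1 A F')" using assms by (simp add: in_set_remove1)
  show ?thesis
    unfolding mset_concat_remove1[OF assms(1), of arc_edge] mset_concat_remove1[OF B1, of arc_edge]
    by (simp only: add.assoc)
qed

lemma case1:
  assumes Fd: "circuit_decomposition G' F'" and Fb: "\<forall>C\<in>set F'. bsimple G' b C"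
    and K: "num_nonzero \<gamma>' F' \<ge> flooding_number G \<gamma> b + 2"
    and tg: "\<gamma>' {r, r'} = i + 1"
    and C12: "C1 \<in> set F'" "C2 \<in> set F'" "C1 \<noteq> C2"
    and C1o: "bsimple G' b ((h', h) # P1)" "(h', h) # P1 = C1 \<or> (h', h) # P1 = rev_tr C1"
    and C2o: "bsimple G' b ((r', r) # P2)" "(r', r) # P2 = C2 \<or> (r', r) # P2 = rev_tr C2"
  shows "\<exists>F N j. flooding G b F \<and> num_nonzero \<gamma> F \<ge> flooding_number G \<gamma> b \<and> N \<in> set F \<and>
    weight \<gamma> N = 0 \<and> j < length N \<and> N ! j = (h, r) \<and> weight \<gamma> (take (Suc j) N) = i"
proof -
  define R where "R = remove1 C2 (remove1 C1 F')"
  have E1: "EE C1 = {#{h, h'}#} + EE P1" using Co_props(1)[OF C1o(2)] by simp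
  have E2: "EE C2 = {#{r, r'}#} + EE P2" using Co_props(1)[OF C2o(2)] by simp
  have dist: "distinct (map arc_edge (concat F'))" using Fd unfolding decomp_iff by simp
  have EF: "EE (concat F') = {#{h, h'}#} + EE P1 + ({#{r, r'}#} + EE P2) + EE (concat R)"
    using EF2[OF C12] E1 E2 unfolding R_def by simp
  have n1: "{h, h'} \<notin># EE P1 + ({#{r, r'}#} + EE P2) + EE (concat R)"
  proof (rule distinct_mset_disj[OF dist, of "{#{h, h'}#}"])
    show "mset (map arc_edge (concat F')) = {#{h, h'}#} + (EE P1 + ({#{r, r'}#} + EE P2) + EE (concat R))"
      using EF by (simp add: add_ac)
  qed simp
  have n2: "{r, r'} \<notin># EE P1 + {#{h, h'}#} + EE P2 + EE (concat R)"
  proof (rule distinct_mset_disj[OF dist, of "{#{r, r'}#}"])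
    show "mset (map arc_edge (concat F')) = {#{r, r'}#} + (EE P1 + {#{h, h'}#} + EE P2 + EE (concat R))"
      using EF by (simp add: add_ac add_mset_commute)
  qed simp
  have P1old: "\<forall>a\<in>set P1. oldarc a"
  proof
    fix a assume a: "a \<in> set P1"
    have "is_arc G' a" using arcs_of_Co[OF Fd C12(1) C1o(2)] a by simp
    moreover have "arc_edge a \<noteq> {h, h'}" "arc_edge a \<noteq> {r, r'}" using n1 n2 a by auto
    ultimately show "oldarc a" using arc'_cases by blast
  qed
  have P2old: "\<forall>a\<in>set P2. oldarc a"
  proof
    fix a assume a: "a \<in> set P2"
    have "is_arc G' a" using arcs_of_Co[OF Fd C12(2) C2o(2)] a by simp
    moreover have "arc_edge a \<in># EE P1 + ({#{r, r'}#} + EE P2) + EE (concat R)" using a by simp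
    then have "arc_edge a \<noteq> {h, h'}" using n1 by metis
    moreover have "arc_edge a \<in># EE P1 + {#{h, h'}#} + EE P2 + EE (concat R)" using a by simp
    then have "arc_edge a \<noteq> {r, r'}" using n2 by metis
    ultimately show "oldarc a" using arc'_cases by blast
  qed
  have hh: "head G' (h', h) = inc G h" "head G' (r', r) = inc G r" using dif by (simp_all add: head_def)
  have w1: "wk G P1 (inc G h) b" using C1o(1) wk_old[OF P1old] hh by (simp add: bsimple_def)
  have w2: "wk G P2 (inc G r) b" using C2o(1) wk_old[OF P2old] hh by (simp add: bsimple_def)
  define N where "N = rev_tr P1 @ [(h, r)] @ P2"
  have wN: "wk G N b b" unfolding N_def
    using wk_rev_tr[OF w1] w2 rdef by (intro wk_append_I) (auto simp: tail_def head_def)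
  have aN: "\<forall>a\<in>set N. is_arc G a"
  proof
    fix a assume "a \<in> set N"
    then have "a \<in> revarc ` set P1 \<or> a = (h, r) \<or> a \<in> set P2" by (auto simp: N_def set_rev_tr)
    then show "is_arc G a"
    proof (elim disjE)
      assume "a \<in> revarc ` set P1"
      then show ?thesis using P1old oldarc_props(1) wf_is_arc_revarc[OF wf] by blast
    qed (use f_arc P2old oldarc_props(1) in blast)+
  qed
  have NE: "EE N + {#{h, h'}, {r, r'}#} = EE C1 + EE C2 + {#{h, r}#}"
    unfolding N_def E1 E2 by (simp add: add_ac add_mset_commute)
  have wC1: "weight \<gamma>' C1 = \<gamma>' {h, h'} + weight \<gamma> P1"
    using Co_props(2)[OF C1o(2)] weight_old[OF P1old] by simp
  have wC2: "weight \<gamma>' C2 = \<gamma>' {r, r'} + weight \<gamma> P2"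
    using Co_props(2)[OF C2o(2)] weight_old[OF P2old] by simp
  have Nw: "weight \<gamma> N = weight \<gamma>' C1 + weight \<gamma>' C2"
    unfolding wC1 wC2 N_def
    using bit_cases2[of "\<gamma>' {h, h'}"] bit_cases2[of "\<gamma>' {r, r'}"] bit_cases2[of "weight \<gamma> P1"] bit_cases2[of "weight \<gamma> P2"]
    by (auto simp: \<gamma>n[symmetric])
  have fin: "flooding G b (N # R) \<and> weight \<gamma>' C1 \<noteq> 0 \<and> weight \<gamma>' C2 \<noteq> 0 \<and>
      num_nonzero \<gamma> (N # R) \<ge> flooding_number G \<gamma> b"
    unfolding R_def
    by (rule finish[OF Fd Fb K C12]) (use E1 E2 NE Nw wN aN in \<open>auto simp: N_def\<close>)
  have wN0: "weight \<gamma> N = 0" using Nw fin by simp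
  define j where "j = length (rev_tr P1) + length [(h, r)] - 1"
  have jj: "N ! j = (h, r)" "take (Suc j) N = rev_tr P1 @ [(h, r)]" "j < length N"
    unfolding N_def j_def using glue_index[of "[(h, r)]" "rev_tr P1" P2] by auto
  have "weight \<gamma> (take (Suc j) N) = i"
  proof -
    have "weight \<gamma> (take (Suc j) N) = weight \<gamma> P1 + \<gamma> {h, r}" using jj by simp
    moreover have "\<gamma>' {h, h'} + weight \<gamma> P1 = 1" using fin wC1 by simp
    ultimately show ?thesis using \<gamma>n tg
      using bit_cases2[of "weight \<gamma> P1"] bit_cases2[of "\<gamma>' {h, h'}"] bit_cases2[of "\<gamma>' {r, r'}"] bit_cases2[of i]
      by auto
  qed
  then show ?thesis using fin wN0 jj by (intro exI[of _ "N # R"] exI[of _ N] exI[of _ j]) auto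
qed

end


lemma weight_mset: "mset T = mset S \<Longrightarrow> weight \<gamma> T = weight \<gamma> S"
  unfolding weight_def by (metis mset_map sum_mset_sum_list)

lemma adj_closed:
  assumes "(x, y) \<in> (adj G)\<^sup>*" "x \<in> V" "\<forall>g\<in>hedges G. inc G g \<in> V \<longrightarrow> inc G (mate G g) \<in> V"
  shows "y \<in> V"
  using assms(1,2)
proof (induction rule: rtrancl_induct)
  case (step y z)
  then obtain g where "g \<in> hedges G" "y = inc G g" "z = inc G (mate G g)" by (auto simp: adj_def)
  then show ?case using step assms(3) by blast
qed

context red
begin

lemma touch:
  assumes conn: "connected_graph G"
    and Fd: "circuit_decomposition G' F'" and Fb: "\<forall>C\<in>set F'. bsimple G' b C"
    and C: "C \<in> set F'" and Co: "(h', h) # P1 @ [(r, r')] = C \<or> (h', h) # P1 @ [(r, r')] = rev_tr C"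
    and P1old: "\<forall>a\<in>set P1. oldarc a"
    and wQ: "wk G (rev_tr P1 @ [(h, r)]) (inc G r) (inc G r)"
    and nbV: "b \<notin> tail G ` set (rev_tr P1 @ [(h, r)])"
  shows "\<exists>D\<in>set F'. D \<noteq> C \<and> (\<exists>c\<in>set D. tail G' c \<in> tail G ` set (rev_tr P1 @ [(h, r)]))"
proof (rule ccontr)
  define Q where "Q = rev_tr P1 @ [(h, r)]"
  define V where "V = tail G ` set Q"
  assume H: "\<not> ?thesis"
  then have H': "\<And>D c. D \<in> set F' \<Longrightarrow> D \<noteq> C \<Longrightarrow> c \<in> set D \<Longrightarrow> tail G' c \<notin> V"
    unfolding V_def Q_def by blast
  have hQ: "head G ` set Q \<subseteq> V" using closed_heads_sub[OF wQ] unfolding V_def Q_def .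
  have V1: "\<And>p. p \<in> set P1 \<Longrightarrow> tail G p \<in> V \<and> head G p \<in> V"
  proof -
    fix p assume p: "p \<in> set P1"
    then have rp: "revarc p \<in> set Q" unfolding Q_def by (simp add: set_rev_tr)
    then have "tail G (revarc p) \<in> V" unfolding V_def by blast
    moreover have "head G (revarc p) \<in> V" using hQ rp by blast
    ultimately show "tail G p \<in> V \<and> head G p \<in> V" by simp
  qed
  have fQ: "(h, r) \<in> set Q" unfolding Q_def by simp
  have uV: "inc G h \<in> V" using fQ unfolding V_def by (force simp: tail_def)
  have vV: "inc G r \<in> V" using fQ hQ by (force simp: head_def)
  have clo: "\<forall>g\<in>hedges G. inc G g \<in> V \<longrightarrow> inc G (mate G g) \<in> V"
  proof (intro ballI impI)
    fix g assume g: "g \<in> hedges G" and gV: "inc G g \<in> V"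
    define y where "y = mate G g"
    have gy: "is_arc G (g, y)" using g by (simp add: is_arc_def y_def)
    show "inc G (mate G g) \<in> V"
    proof (cases "{g, y} = {h, r}")
      case True
      then have "y = h \<or> y = r" by (auto simp: doubleton_eq_iff)
      then show ?thesis using uV vV unfolding y_def by auto
    next
      case False
      have "{g, y} \<in> edges G" using g unfolding edges_def y_def by blast
      then have eG': "{g, y} \<in> edges G'" using False edges' by auto
      obtain D a where D: "D \<in> set F'" "a \<in> set D" "arc_edge a = {g, y}" "is_arc G' a"
        using arc_in_F'[OF Fd eG'] by blast
      have "arc_edge a \<noteq> {h, h'}" "arc_edge a \<noteq> {r, r'}"
        using D(3) \<open>{g, y} \<in> edges G\<close> new_notin_edges by auto
      then have oa: "oldarc a" using arc'_cases[OF D(4)] by blast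
      have "a = (g, y) \<or> a = revarc (g, y)"
        using arc_unique[OF wf gy oldarc_props(1)[OF oa]] D(3) by (simp add: arc_edge_def)
      then have ta: "(tail G a = inc G g \<and> head G a = inc G y) \<or> (tail G a = inc G y \<and> head G a = inc G g)"
        by (auto simp: tail_def head_def revarc_def)
      show ?thesis
      proof (cases "D = C")
        case True
        have aC: "a \<in> set C" using D(2) True by simp
        have "a \<in> set ((h', h) # P1 @ [(r, r')]) \<or> revarc a \<in> set ((h', h) # P1 @ [(r, r')])"
        proof (cases "(h', h) # P1 @ [(r, r')] = C")
          case True then show ?thesis using aC by simp
        next
          case False
          then have "(h', h) # P1 @ [(r, r')] = rev_tr C" using Co by blast
          moreover have "revarc a \<in> set (rev_tr C)" using aC by (simp add: set_rev_tr)
          ultimately show ?thesis by simp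
        qed
        then have "\<exists>a'\<in>set ((h', h) # P1 @ [(r, r')]). a' = a \<or> a' = revarc a" by blast
        then obtain a' where a': "a' \<in> set ((h', h) # P1 @ [(r, r')])" "a' = a \<or> a' = revarc a" by blast
        have ea': "arc_edge a' = arc_edge a" using a'(2) arc_edge_revarc by metis
        have "a' \<noteq> (h', h)" using ea' \<open>arc_edge a \<noteq> {h, h'}\<close> ae_new(1) by metis
        moreover have "a' \<noteq> (r, r')" using ea' \<open>arc_edge a \<noteq> {r, r'}\<close> ae_new(4) by metis
        ultimately have "a' \<in> set P1" using a'(1) by simp
        then have "tail G a' \<in> V" "head G a' \<in> V" using V1 by auto
        then have "tail G a \<in> V" "head G a \<in> V" using a'(2) by auto
        then show ?thesis using ta unfolding y_def by auto
      next
        case False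
        have nt: "tail G' a \<notin> V" using H'[OF D(1) False D(2)] .
        have "wk G' D b b" using Fb D(1) by (simp add: bsimple_def)
        then have sub: "head G' ` set D \<subseteq> tail G' ` set D" by (rule closed_heads_sub)
        have "head G' a \<in> head G' ` set D" using D(2) by simp
        then have "head G' a \<in> tail G' ` set D" using sub by (rule rev_subsetD)
        then obtain c where c: "c \<in> set D" "head G' a = tail G' c" by (metis imageE)
        have nh: "head G' a \<notin> V" using H'[OF D(1) False c(1)] c(2) by simp
        have "tail G a \<notin> V" "head G a \<notin> V" using nt nh oldarc_props(3,4)[OF oa] by auto
        then show ?thesis using ta gV by auto
      qed
    qed
  qed
  have "(inc G h, b) \<in> (adj G)\<^sup>*"
    using conn wf hH bV unfolding connected_graph_def wf_graph_def by blast
  then have "b \<in> V" by (rule adj_closed[OF _ uV clo])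
  then show False using nbV unfolding V_def Q_def by blast
qed

end


context red
begin

lemma case2:
  assumes conn: "connected_graph G"
    and Fd: "circuit_decomposition G' F'" and Fb: "\<forall>C\<in>set F'. bsimple G' b C"
    and K: "num_nonzero \<gamma>' F' \<ge> flooding_number G \<gamma> b + 2"
    and C: "C \<in> set F'" and Co: "(h', h) # P1 @ [(r, r')] = C \<or> (h', h) # P1 @ [(r, r')] = rev_tr C"
    and Cb: "bsimple G' b ((h', h) # P1 @ [(r, r')])"
  shows "\<exists>F N j. flooding G b F \<and> num_nonzero \<gamma> F \<ge> flooding_number G \<gamma> b \<and> N \<in> set F \<and>
    weight \<gamma> N = 0 \<and> j < length N \<and> N ! j = (h, r) \<and> weight \<gamma> (take (Suc j) N) = i"
proof -
  let ?Co = "(h', h) # P1 @ [(r, r')]"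
  have EC: "EE C = {#{h, h'}#} + EE P1 + {#{r, r'}#}" using Co_props(1)[OF Co] by (simp add: add_mset_commute)
  have dist: "distinct (map arc_edge (concat F'))" using Fd unfolding decomp_iff by simp
  have EF1: "EE (concat F') = EE C + EE (concat (remove1 C F'))"
    using mset_concat_remove1[OF C, of arc_edge] by simp
  have n1: "{h, h'} \<notin># EE P1 + {#{r, r'}#} + EE (concat (remove1 C F'))"
  proof (rule distinct_mset_disj[OF dist, of "{#{h, h'}#}"])
    show "mset (map arc_edge (concat F')) = {#{h, h'}#} + (EE P1 + {#{r, r'}#} + EE (concat (remove1 C F')))"
      using EF1 EC by (simp add: add_ac)
  qed simp
  have n2: "{r, r'} \<notin># EE P1 + {#{h, h'}#} + EE (concat (remove1 C F'))"
  proof (rule distinct_mset_disj[OF dist, of "{#{r, r'}#}"])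
    show "mset (map arc_edge (concat F')) = {#{r, r'}#} + (EE P1 + {#{h, h'}#} + EE (concat (remove1 C F')))"
      using EF1 EC by (simp add: add_ac add_mset_commute)
  qed simp
  have P1old: "\<forall>a\<in>set P1. oldarc a"
  proof
    fix a assume a: "a \<in> set P1"
    have "is_arc G' a" using arcs_of_Co[OF Fd C Co] a by simp
    moreover have "arc_edge a \<in># EE P1 + {#{r, r'}#} + EE (concat (remove1 C F'))" using a by simp
    then have "arc_edge a \<noteq> {h, h'}" using n1 by metis
    moreover have "arc_edge a \<in># EE P1 + {#{h, h'}#} + EE (concat (remove1 C F'))" using a by simp
    then have "arc_edge a \<noteq> {r, r'}" using n2 by metis
    ultimately show "oldarc a" using arc'_cases by blast
  qed
  have hh: "head G' (h', h) = inc G h" "tail G' (r, r') = inc G r" using dif by (simp_all add: head_def tail_def)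
  have "wk G' ?Co b b" using Cb by (simp add: bsimple_def)
  then have "wk G' P1 (inc G h) (inc G r)" using hh by simp
  then have w1: "wk G P1 (inc G h) (inc G r)" using wk_old[OF P1old] by simp
  define Q where "Q = rev_tr P1 @ [(h, r)]"
  have wQ: "wk G Q (inc G r) (inc G r)" unfolding Q_def
    using wk_rev_tr[OF w1] rdef by (intro wk_append_I) (auto simp: tail_def head_def)
  have nbV: "b \<notin> tail G ` set Q"
  proof -
    have mh: "map (head G') ?Co = map (tail G') (P1 @ [(r, r')]) @ [b]" using bsimple_heads[OF Cb] by simp
    then have eqm: "map (head G') ((h', h) # P1) = map (tail G') (P1 @ [(r, r')])" by simp
    have "head G' ` set P1 \<subseteq> set (map (head G') ((h', h) # P1))" by auto
    also have "\<dots> = set (map (tail G') (P1 @ [(r, r')]))" by (simp only: eqm)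
    also have "\<dots> = tail G' ` set (P1 @ [(r, r')])" by (simp only: set_map)
    finally have "head G' ` set P1 \<subseteq> tail G' ` set (P1 @ [(r, r')])" .
    moreover have "b \<notin> tail G' ` set (P1 @ [(r, r')])" using Cb by (simp add: bsimple_def)
    ultimately have "b \<notin> head G' ` set P1" by blast
    then have "b \<notin> head G ` set P1" using P1old oldarc_props(4) by auto
    moreover have "tail G ` set Q = head G ` set P1 \<union> {inc G h}"
    proof -
      have "tail G ` set (rev_tr P1) = head G ` set P1" using map_tail_rev_tr[of G P1] by (metis set_map set_rev)
      moreover have "tail G (h, r) = inc G h" by (simp add: tail_def)
      ultimately show ?thesis unfolding Q_def by auto
    qed
    ultimately show ?thesis using hb by auto
  qed
  obtain D c where D: "D \<in> set F'" "D \<noteq> C" "c \<in> set D" "tail G' c \<in> tail G ` set Q"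
    using touch[OF conn Fd Fb C Co P1old wQ[unfolded Q_def] nbV[unfolded Q_def]] unfolding Q_def by blast
  define R where "R = remove1 D (remove1 C F')"
  have EF: "EE (concat F') = EE C + EE D + EE (concat R)" using EF2[OF C D(1) D(2)[symmetric]] unfolding R_def .
  have nD: "{h, h'} \<notin># EE D" "{r, r'} \<notin># EE D"
  proof -
    have m: "mset (map arc_edge (concat F')) = EE C + (EE D + EE (concat R))" using EF by (simp only: add.assoc)
    have i1: "{h, h'} \<in># EE C" "{r, r'} \<in># EE C" using EC by simp_all
    have "{h, h'} \<notin># EE D + EE (concat R)" by (rule distinct_mset_disj[OF dist m i1(1)])
    then show "{h, h'} \<notin># EE D" by simp
    have "{r, r'} \<notin># EE D + EE (concat R)" by (rule distinct_mset_disj[OF dist m i1(2)])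
    then show "{r, r'} \<notin># EE D" by simp
  qed
  have Dold: "\<forall>a\<in>set D. oldarc a"
  proof
    fix a assume a: "a \<in> set D"
    have "is_arc G' a" using Fd D(1) a unfolding decomp_iff is_circuit_iff goodarcs_def by blast
    moreover have "arc_edge a \<in># EE D" using a by simp
    then have "arc_edge a \<noteq> {h, h'}" "arc_edge a \<noteq> {r, r'}" using nD by metis+
    ultimately show "oldarc a" using arc'_cases by blast
  qed
  have "wk G' D b b" using Fb D(1) by (simp add: bsimple_def)
  then have wD: "wk G D b b" using wk_old[OF Dold] by simp
  define x where "x = tail G c"
  have xV: "x \<in> tail G ` set Q" using D(4) oldarc_props(3) Dold D(3) unfolding x_def by metis
  have xb: "x \<noteq> b" using xV nbV by blast
  obtain X Y0 where DXY: "D = X @ c # Y0" using D(3) by (metis split_list)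
  define Y where "Y = c # Y0"
  obtain z where wX: "wk G X b z" and wY': "wk G (c # Y0) z b" using wD unfolding DXY wk_append by blast
  have zx: "z = x" using wY' unfolding x_def by simp
  have wX: "wk G X b x" and wY: "wk G Y x b" using wX wY' zx unfolding Y_def by auto
  have Xne: "X \<noteq> []" using wX xb by auto
  obtain Qp Qs where QQ: "mset (Qp @ Qs) = mset Q" "Qp \<noteq> []" "last Qp = last Q" "wk G Qp x (inc G r)" "wk G Qs (inc G r) x"
    using rotate_at[OF wQ xV] by blast
  have lastQ: "last Q = (h, r)" unfolding Q_def by simp
  have Dw: "weight \<gamma> D = weight \<gamma> X + weight \<gamma> Y" unfolding DXY Y_def by simp
  have DE: "EE D = EE X + EE Y" unfolding DXY Y_def by simp
  have Darcs: "\<forall>a\<in>set X \<union> set Y. is_arc G a" using Dold oldarc_props(1) unfolding DXY Y_def by auto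
  define X1 where "X1 = (if weight \<gamma> X + weight \<gamma> Qp = i then X else rev_tr Y)"
  define Y1 where "Y1 = (if weight \<gamma> X + weight \<gamma> Qp = i then Y else rev_tr X)"
  have wX1: "wk G X1 b x" "wk G Y1 x b" "X1 \<noteq> []"
    unfolding X1_def Y1_def using wX wY Xne wk_rev_tr Y_def by auto
  have EX1: "EE X1 + EE Y1 = EE D" unfolding X1_def Y1_def DE by (simp add: add.commute)
  have WX1: "weight \<gamma> X1 + weight \<gamma> Y1 = weight \<gamma> D" unfolding X1_def Y1_def Dw by (simp add: add.commute del: add_bit_eq_xor)
  have aX1: "\<forall>a\<in>set X1 \<union> set Y1. is_arc G a"
    unfolding X1_def Y1_def using Darcs wf_is_arc_revarc[OF wf] by (auto simp: set_rev_tr)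
  define N where "N = X1 @ Qp @ Qs @ Y1"
  have wN: "wk G N b b" unfolding N_def using wX1 QQ(4,5) by (intro wk_append_I)
  have mQ: "mset N = mset X1 + mset Y1 + mset Q" unfolding N_def using QQ(1) by (simp add: add_ac)
  have EQ: "EE Q = EE P1 + {#{h, r}#}" unfolding Q_def by simp
  have EN: "EE N = EE D + EE P1 + {#{h, r}#}"
  proof -
    have "EE N = image_mset arc_edge (mset N)" by simp
    also have "\<dots> = EE X1 + EE Y1 + EE Q" unfolding mQ by simp
    finally show ?thesis using EX1 EQ by (simp add: add_ac)
  qed
  have NE: "EE N + {#{h, h'}, {r, r'}#} = EE C + EE D + {#{h, r}#}"
    unfolding EN EC by (simp add: add_ac add_mset_commute)
  have WQ: "weight \<gamma> Q = weight \<gamma> P1 + \<gamma> {h, r}" unfolding Q_def by simp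
  have WN: "weight \<gamma> N = weight \<gamma> D + weight \<gamma> Q"
  proof -
    have e1: "weight \<gamma> N = weight \<gamma> X1 + weight \<gamma> Y1 + weight \<gamma> (Qp @ Qs)" unfolding N_def by (simp add: add_ac del: add_bit_eq_xor)
    have e2: "weight \<gamma> (Qp @ Qs) = weight \<gamma> Q" by (rule weight_mset[OF QQ(1)])
    show ?thesis unfolding e1 e2 WX1 by (rule refl)
  qed
  have wC: "weight \<gamma>' C = \<gamma>' {h, h'} + weight \<gamma> P1 + \<gamma>' {r, r'}"
  proof -
    have "weight \<gamma>' C = weight \<gamma>' ?Co" using Co_props(2)[OF Co] by simp
    also have "\<dots> = \<gamma>' {h, h'} + weight \<gamma>' P1 + \<gamma>' {r, r'}" by (simp add: add_ac del: add_bit_eq_xor)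
    finally show ?thesis unfolding weight_old[OF P1old] .
  qed
  have wDD: "weight \<gamma>' D = weight \<gamma> D" using weight_old[OF Dold] .
  have Nw: "weight \<gamma> N = weight \<gamma>' C + weight \<gamma>' D"
    unfolding WN WQ wC wDD
    using bit_cases2[of "\<gamma>' {h, h'}"] bit_cases2[of "\<gamma>' {r, r'}"] bit_cases2[of "weight \<gamma> P1"] bit_cases2[of "weight \<gamma> D"]
    by (auto simp: \<gamma>n[symmetric])
  have aN: "\<forall>a\<in>set N. is_arc G a"
  proof
    fix a assume "a \<in> set N"
    then have "a \<in> set X1 \<union> set Y1 \<or> a \<in> set Q" using QQ(1) unfolding N_def
      by (metis Un_iff set_append set_mset_mset)
    then show "is_arc G a"
    proof
      assume "a \<in> set Q"
      then have "a \<in> revarc ` set P1 \<or> a = (h, r)" unfolding Q_def by (auto simp: set_rev_tr)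
      then show ?thesis using P1old oldarc_props(1) wf_is_arc_revarc[OF wf] f_arc by blast
    qed (use aX1 in blast)
  qed
  have Nne: "N \<noteq> []" using wX1(3) unfolding N_def by simp
  have fin: "flooding G b (N # R) \<and> weight \<gamma>' C \<noteq> 0 \<and> weight \<gamma>' D \<noteq> 0 \<and>
      num_nonzero \<gamma> (N # R) \<ge> flooding_number G \<gamma> b"
    unfolding R_def
    by (rule finish[OF Fd Fb K C D(1) D(2)[symmetric]]) (use EC NE Nw wN aN Nne in auto)
  have wN0: "weight \<gamma> N = 0" using Nw fin by simp
  define j where "j = length X1 + length Qp - 1"
  have jj: "N ! j = (h, r)" "take (Suc j) N = X1 @ Qp" "j < length N"
    unfolding N_def j_def using glue_index[OF QQ(2), of X1 "Qs @ Y1"] QQ(3) lastQ by auto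
  have "weight \<gamma> (take (Suc j) N) = i"
  proof -
    have tw: "weight \<gamma> (take (Suc j) N) = weight \<gamma> X1 + weight \<gamma> Qp" using jj by simp
    have wD1: "weight \<gamma> X + weight \<gamma> Y = 1" using fin wDD Dw by simp
    show ?thesis
    proof (cases "weight \<gamma> X + weight \<gamma> Qp = i")
      case True then show ?thesis using tw unfolding X1_def by simp
    next
      case False
      then have "weight \<gamma> X1 = weight \<gamma> Y" unfolding X1_def by simp
      then show ?thesis using tw False wD1
        using bit_cases2[of "weight \<gamma> X"] bit_cases2[of "weight \<gamma> Y"] bit_cases2[of "weight \<gamma> Qp"] bit_cases2[of i]
        by auto
    qed
  qed
  then show ?thesis using fin wN0 jj by (intro exI[of _ "N # R"] exI[of _ N] exI[of _ j]) auto
qed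

end


context red
begin

lemma main_red:
  assumes conn: "connected_graph G"
    and Fd: "circuit_decomposition G' F'" and Fb: "\<forall>C\<in>set F'. bsimple G' b C"
    and K: "num_nonzero \<gamma>' F' \<ge> flooding_number G \<gamma> b + 2"
    and tg: "\<gamma>' {r, r'} = i + 1"
  shows "\<exists>F N j. flooding G b F \<and> num_nonzero \<gamma> F \<ge> flooding_number G \<gamma> b \<and> N \<in> set F \<and>
    weight \<gamma> N = 0 \<and> j < length N \<and> N ! j = (h, r) \<and> weight \<gamma> (take (Suc j) N) = i"
proof -
  obtain C1 a1 where C1: "C1 \<in> set F'" "a1 \<in> set C1" "arc_edge a1 = {h, h'}" "is_arc G' a1"
    using arc_in_F'[OF Fd new_in_edges'(1)] by blast
  obtain C2 a2 where C2: "C2 \<in> set F'" "a2 \<in> set C2" "arc_edge a2 = {r, r'}" "is_arc G' a2"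
    using arc_in_F'[OF Fd new_in_edges'(2)] by blast
  have B1: "bsimple G' b C1" using Fb C1(1) by blast
  obtain C1o where C1o: "bsimple G' b C1o" "hd C1o = (h', h)" "C1o = C1 \<or> C1o = rev_tr C1"
    using orient_h[OF B1 C1(2,4,3)] by blast
  have C1ne: "C1o \<noteq> []" using C1o(1) by (simp add: bsimple_def)
  have C1eq: "C1o = (h', h) # tl C1o" using C1ne C1o(2) by (metis list.collapse)
  show ?thesis
  proof (cases "C1 = C2")
    case False
    have B2: "bsimple G' b C2" using Fb C2(1) by blast
    obtain C2o where C2o: "bsimple G' b C2o" "hd C2o = (r', r)" "C2o = C2 \<or> C2o = rev_tr C2"
      using orient_r[OF B2 C2(2,4,3)] by blast
    have C2ne: "C2o \<noteq> []" using C2o(1) by (simp add: bsimple_def)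
    have C2eq: "C2o = (r', r) # tl C2o" using C2ne C2o(2) by (metis list.collapse)
    show ?thesis
      by (rule case1[OF Fd Fb K tg C1(1) C2(1) False, of "tl C1o" "tl C2o"])
         (use C1o C1eq C2o C2eq in metis)+
  next
    case True
    have "a2 \<in> set C1o \<or> revarc a2 \<in> set C1o" using C1o(3) C2(2) True by (auto simp: set_rev_tr)
    then obtain a2o where a2o: "a2o \<in> set C1o" "arc_edge a2o = {r, r'}" using C2(3) by (metis arc_edge_revarc)
    have ia: "is_arc G' a2o" using arcs_of_Co[OF Fd C1(1) C1o(3) a2o(1)] .
    have "a2o = (r', r) \<or> a2o = revarc (r', r)" using arc_unique[OF wf' arcs_new(3) ia] a2o(2) by simp
    moreover have "a2o \<noteq> (r', r)"
    proof
      assume a: "a2o = (r', r)"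
      then have "tail G' a2o = b" by (simp add: tail_def)
      then have "a2o = hd C1o" using bsimple_first[OF C1o(1) a2o(1)] by simp
      then have "arc_edge a2o = {h, h'}" using C1o(2) by simp
      then show False using a2o(2) new_neq by simp
    qed
    ultimately have a2r: "a2o = (r, r')" by (simp add: revarc_def)
    then have "head G' a2o = b" by (simp add: head_def)
    then have last: "last C1o = (r, r')" using bsimple_last[OF C1o(1) a2o(1)] a2r by simp
    have Tne: "tl C1o \<noteq> []"
    proof
      assume "tl C1o = []"
      then have "last C1o = (h', h)" using C1eq by (metis last_ConsL)
      then show False using last dif by simp
    qed
    have "last (tl C1o) = (r, r')" using last Tne C1eq by (metis last_ConsR)
    then have Teq: "tl C1o = butlast (tl C1o) @ [(r, r')]" using Tne by (metis append_butlast_last_id)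
    have Coeq: "(h', h) # butlast (tl C1o) @ [(r, r')] = C1o" using C1eq Teq by metis
    show ?thesis
      by (rule case2[OF conn Fd Fb K C1(1), of "butlast (tl C1o)"]) (use Coeq C1o in auto)
  qed
qed

end

lemma decomp_same_circuit:
  assumes "circuit_decomposition G F" "C1 \<in> set F" "C2 \<in> set F" "a \<in> set C1" "a \<in> set C2"
  shows "C1 = C2"
proof (rule ccontr)
  assume ne: "C1 \<noteq> C2"
  have "distinct (map arc_edge (concat F))" using assms(1) unfolding decomp_iff by simp
  then have "distinct (concat F)" by (simp add: distinct_map)
  then have "set C1 \<inter> set C2 = {}" using assms(2,3) ne by (simp add: distinct_concat_iff)
  then show False using assms(4,5) by blast
qed


lemma key:
  fixes G :: "'v hgraph" and \<gamma> :: signature and b :: 'v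
  assumes RES: "RES_graph G \<gamma> b"
    and hyp: "\<forall>G' \<gamma>'. is_reduction G \<gamma> b G' \<gamma>' \<longrightarrow>
           flooding_number G' \<gamma>' b \<ge> flooding_number G \<gamma> b + 2"
    and f: "is_arc G f" and tf: "tail G f \<noteq> b" and hf: "head G f \<noteq> b"
  shows "\<exists>F N j. optimal_flooding G \<gamma> b F \<and> N \<in> set F \<and> weight \<gamma> N = 0 \<and> j < length N \<and> N ! j = f \<and>
           weight \<gamma> (take (Suc j) N) = i"
proof -
  have wf: "wf_graph G" and conn: "connected_graph G" and bV: "b \<in> verts G"
    using RES by (auto simp: RES_graph_def eulerian_def)
  define h where "h = fst f"
  define r where "r = snd f"
  have hH: "h \<in> hedges G" and rdef: "r = mate G h" using f by (auto simp: is_arc_def h_def r_def)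
  have hb: "inc G h \<noteq> b" and rb: "inc G r \<noteq> b" using tf hf by (auto simp: tail_def head_def h_def r_def)
  have fin: "finite (hedges G)" using wf by (simp add: wf_graph_def)
  obtain h' where h': "h' \<notin> hedges G" using ex_new_if_finite[OF infinite_UNIV_nat fin] by blast
  obtain r' where r': "r' \<notin> hedges G \<union> {h'}" using ex_new_if_finite[OF infinite_UNIV_nat, of "hedges G \<union> {h'}"] fin by blast
  have hr': "h' \<noteq> r'" using r' by simp
  define \<gamma>' where "\<gamma>' = \<gamma>({h, h'} := \<gamma> {h, r} + i + 1, {r, r'} := i + 1)"
  have n1: "{h, h'} \<notin> edges G" "{r, r'} \<notin> edges G" using hedges_Union[OF wf] h' r' by auto
  have ne12: "{h, h'} \<noteq> {r, r'}"
  proof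
    assume "{h, h'} = {r, r'}"
    then have "h' \<in> {r, r'}" by auto
    moreover have "r \<in> hedges G" using wf hH rdef by (simp add: wf_graph_def)
    ultimately show False using h' hr' by auto
  qed
  have go: "\<forall>e\<in>edges G - {{h, r}}. \<gamma>' e = \<gamma> e" using n1 unfolding \<gamma>'_def by auto
  have gn: "\<gamma>' {h, h'} + \<gamma>' {r, r'} = \<gamma> {h, r}"
    unfolding \<gamma>'_def using ne12 bit_cases2[of i] bit_cases2[of "\<gamma> {h, r}"] by auto
  have r'n: "r' \<notin> hedges G" using r' by simp
  interpret R: red G b h r h' r' \<gamma> \<gamma>'
    by (rule red.intro[OF wf bV hH rdef hb rb h' r'n hr' go gn])
  have eg: "edge_of_G_minus G b h r" unfolding edge_of_G_minus_def using hH rdef hb rb by simp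
  have "is_reduction G \<gamma> b R.G' \<gamma>'"
    unfolding is_reduction_def using eg h' r'n hr' R.G'_def go gn by blast
  then have K0: "flooding_number R.G' \<gamma>' b \<ge> flooding_number G \<gamma> b + 2" using hyp by blast
  then obtain D' where D': "circuit_decomposition R.G' D'" "\<forall>C\<in>set D'. weight \<gamma>' C \<noteq> 0 \<and> hits R.G' C b"
    "length D' = flooding_number R.G' \<gamma>' b"
    using fn_attained[of R.G' \<gamma>' b] by auto
  obtain F' where F': "circuit_decomposition R.G' F'" "\<forall>P\<in>set F'. bsimple R.G' b P" "num_nonzero \<gamma>' F' \<ge> num_nonzero \<gamma>' D'"
    using split_decomp[OF D'(1)] D'(2) by blast
  have "filter (\<lambda>C. weight \<gamma>' C \<noteq> 0) D' = D'" by (rule filter_True) (use D'(2) in blast)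
  then have "num_nonzero \<gamma>' D' = length D'" unfolding num_nonzero_def by (rule arg_cong)
  then have K: "num_nonzero \<gamma>' F' \<ge> flooding_number G \<gamma> b + 2" using F'(3) D'(3) K0 by linarith
  have tg: "\<gamma>' {r, r'} = i + 1" unfolding \<gamma>'_def by simp
  obtain F N j where FN: "flooding G b F" "num_nonzero \<gamma> F \<ge> flooding_number G \<gamma> b" "N \<in> set F"
    "weight \<gamma> N = 0" "j < length N" "N ! j = (h, r)" "weight \<gamma> (take (Suc j) N) = i"
    using R.main_red[OF conn F'(1) F'(2) K tg] by blast
  have opt: "optimal_flooding G \<gamma> b F"
    unfolding optimal_flooding_def
  proof (intro conjI allI impI)
    show "flooding G b F" by (rule FN(1))
    fix F2 assume F2: "flooding G b F2"
    show "num_nonzero \<gamma> F2 \<le> num_nonzero \<gamma> F"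
    proof (cases "num_nonzero \<gamma> F2 \<ge> 1")
      case True then show ?thesis using merge_flooding[OF F2 True] FN(2) by linarith
    qed simp
  qed
  have "f = (h, r)" by (simp add: h_def r_def)
  then show ?thesis using opt FN by blast
qed

lemma nonloop_of_key:
  assumes opt: "optimal_flooding G \<gamma> b F" and N: "N \<in> set F" "weight \<gamma> N = 0"
    and j: "j < length N" "N ! j = f" "weight \<gamma> (take (Suc j) N) = i"
  shows "nonloop_element G \<gamma> b (f, i)"
proof -
  have cd: "circuit_decomposition G F" using opt by (simp add: optimal_flooding_def flooding_def)
  have nonempty: "\<And>C. C \<in> set F \<Longrightarrow> C \<noteq> []" using cd by (auto simp: circuit_decomposition_def is_circuit_iff)
  define rep where "rep = (\<lambda>C::arc list. (hd C, weight \<gamma> [hd C]))"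
  define R where "R = insert (f, i) (rep ` (zero_circuits \<gamma> F - {N}))"
  have Nz: "N \<in> zero_circuits \<gamma> F" using N by (simp add: zero_circuits_def)
  have repN: "represents \<gamma> (f, i) N" unfolding represents_def using j by auto
  have repC: "\<And>C. C \<in> set F \<Longrightarrow> represents \<gamma> (rep C) C"
  proof -
    fix C assume "C \<in> set F"
    then have "C \<noteq> []" using nonempty by blast
    then show "represents \<gamma> (rep C) C" unfolding represents_def rep_def
      by (intro exI[of _ 0]) (auto simp: hd_conv_nth take_Suc_conv_app_nth)
  qed
  have same: "\<And>x C1 C2. C1 \<in> set F \<Longrightarrow> C2 \<in> set F \<Longrightarrow> represents \<gamma> x C1 \<Longrightarrow> represents \<gamma> x C2 \<Longrightarrow> C1 = C2"
  proof -
    fix x C1 C2 assume C: "C1 \<in> set F" "C2 \<in> set F" "represents \<gamma> x C1" "represents \<gamma> x C2"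
    have "fst x \<in> set C1" using C(3) unfolding represents_def by (metis nth_mem)
    moreover have "fst x \<in> set C2" using C(4) unfolding represents_def by (metis nth_mem)
    ultimately
    show "C1 = C2" using decomp_same_circuit[OF cd C(1,2)] by blast
  qed
  have zF: "\<And>C. C \<in> zero_circuits \<gamma> F \<Longrightarrow> C \<in> set F" by (simp add: zero_circuits_def)
  have sor: "system_of_representatives \<gamma> F R"
    unfolding system_of_representatives_def
  proof (intro conjI ballI)
    fix x assume "x \<in> R"
    then show "\<exists>C\<in>zero_circuits \<gamma> F. represents \<gamma> x C"
      unfolding R_def using Nz repN repC zF by auto
  next
    fix C assume Cz: "C \<in> zero_circuits \<gamma> F"
    have CF: "C \<in> set F" using zF[OF Cz] .
    show "\<exists>!x. x \<in> R \<and> represents \<gamma> x C"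
    proof (cases "C = N")
      case True
      show ?thesis
      proof (rule ex1I[of _ "(f, i)"])
        show "(f, i) \<in> R \<and> represents \<gamma> (f, i) C" using True repN unfolding R_def by simp
        fix y assume y: "y \<in> R \<and> represents \<gamma> y C"
        show "y = (f, i)"
        proof (rule ccontr)
          assume "y \<noteq> (f, i)"
          then obtain C' where C': "C' \<in> zero_circuits \<gamma> F" "C' \<noteq> N" "y = rep C'" using y unfolding R_def by auto
          have "represents \<gamma> y C'" using repC zF C' by simp
          then have "C' = C" using same zF[OF C'(1)] CF y by blast
          then show False using C'(2) True by simp
        qed
      qed
    next
      case False
      show ?thesis
      proof (rule ex1I[of _ "rep C"])
        show "rep C \<in> R \<and> represents \<gamma> (rep C) C" using False Cz repC CF unfolding R_def by simp
        fix y assume y: "y \<in> R \<and> represents \<gamma> y C"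
        show "y = rep C"
        proof (cases "y = (f, i)")
          case True
          then have "C = N" using same CF N(1) y repN by blast
          then show ?thesis using False by simp
        next
          case False
          then obtain C' where C': "C' \<in> zero_circuits \<gamma> F" "y = rep C'" using y unfolding R_def by auto
          have "represents \<gamma> y C'" using repC zF C' by simp
          then have "C' = C" using same zF[OF C'(1)] CF y by blast
          then show ?thesis using C' by simp
        qed
      qed
    qed
  qed
  have "R \<in> flooding_matroid_bases G \<gamma> b" unfolding flooding_matroid_bases_def using opt sor by blast
  moreover have "(f, i) \<in> R" unfolding R_def by simp
  ultimately show ?thesis unfolding nonloop_element_def by blast
qed

theorem mainTheorem8:
  fixes G :: "'v hgraph" and \<gamma> :: signature and b :: 'v
  assumes "RES_graph G \<gamma> b"
    and "\<forall>G' \<gamma>'. is_reduction G \<gamma> b G' \<gamma>' \<longrightarrow>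
           flooding_number G' \<gamma>' b \<ge> flooding_number G \<gamma> b + 2"
    and "is_arc G f"
    and "tail G f \<noteq> b" and "head G f \<noteq> b"
  shows "nonloop_element G \<gamma> b (f, 0) \<and> nonloop_element G \<gamma> b (f, 1)"
proof -
  have "\<And>i. nonloop_element G \<gamma> b (f, i)"
  proof -
    fix i :: bit
    obtain F N j where "optimal_flooding G \<gamma> b F" "N \<in> set F" "weight \<gamma> N = 0" "j < length N" "N ! j = f"
      "weight \<gamma> (take (Suc j) N) = i"
      using key[OF assms, of i] by blast
    then show "nonloop_element G \<gamma> b (f, i)" by (rule nonloop_of_key)
  qed
  then show ?thesis by simp
qed


end
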